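(* Let $(\mathcal{X},d)$ be a proper metric space, $N\ge1$, $(\boldsymbol{\lambda},\boldsymbol{\nu})\in\Delta_N\times\mathcal{P}_1(\mathcal{X})^N$ and $(\boldsymbol{\lambda}^n,\boldsymbol{\nu}^n)_{n\in\mathbb{N}}$ a sequence in $\Delta_N\times\mathcal{P}_1(\mathcal{X})^N$ such that $$\sum_{i=1}^N|\lambda_i^n-\lambda_i|+\max_{i=1,\dots,N}W_1(\nu_i^n,\nu_i)\to0\quad\text{as }n\to\infty.$$ Then $\mathcal{F}_{\boldsymbol{\lambda}^n,\boldsymbol{\nu}^n}$ $\Gamma$-converges to $\mathcal{F}_{\boldsymbol{\lambda},\boldsymbol{\nu}}$ for the narrow topology; in particular, if $\mu^n\in\mathrm{Med}_{\boldsymbol{\lambda}^n}(\boldsymbol{\nu}^n)$ for all $n$, then every narrow cluster point of $(\mu^n)_n$ belongs to $\mathrm{Med}_{\boldsymbol{\lambda}}(\boldsymbol{\nu})$.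
   Context: A metric space is proper if its closed balls are compact. $\Delta_N$ is the unit simplex of $\mathbb{R}^N$. $\mathcal{P}_1(\mathcal{X})$ is the set of Borel probability measures on $\mathcal{X}$ with finite first moment, with 1-Wasserstein distance $W_1$. For $(\boldsymbol{\lambda},\boldsymbol{\nu})\in\Delta_N\times\mathcal{P}_1(\mathcal{X})^N$, $\mathcal{F}_{\boldsymbol{\lambda},\boldsymbol{\nu}}(\mu)=\sum_{i=1}^N\lambda_iW_1(\nu_i,\mu)$ for $\mu\in\mathcal{P}_1(\mathcal{X})$, and $\mathrm{Med}_{\boldsymbol{\lambda}}(\boldsymbol{\nu})$ is its set of minimizers over $\mathcal{P}_1(\mathcal{X})$. The narrow topology is convergence against bounded continuous functions. *)

theory Defs
  imports "HOL-Probability.Probability"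
begin

definition proper_space :: "'a::metric_space itself \<Rightarrow> bool" where
  "proper_space _ \<longleftrightarrow> (\<forall>(x::'a) r. compact (cball x r))"

text \<open>Unit unit_simplex of R^N, coordinates indexed by 0..N-1.\<close>
definition unit_simplex :: "nat \<Rightarrow> (nat \<Rightarrow> real) set" where
  "unit_simplex N = {l. (\<forall>i<N. 0 \<le> l i) \<and> (\<Sum>i<N. l i) = 1}"

definition P1 :: "'a::metric_space measure set" where
  "P1 = {M. prob_space M \<and> sets M = sets borel \<and> (\<exists>x0. integrable M (\<lambda>x. dist x0 x))}"

definition couplings :: "'a::metric_space measure \<Rightarrow> 'a measure \<Rightarrow> ('a \<times> 'a) measure set" where
  "couplings \<mu> \<nu> = {\<pi>. prob_space \<pi> \<and> sets \<pi> = sets borel \<and>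
      distr \<pi> borel fst = \<mu> \<and> distr \<pi> borel snd = \<nu>}"

text \<open>1-Wasserstein distance (finite on P1).\<close>
definition W1 :: "'a::metric_space measure \<Rightarrow> 'a measure \<Rightarrow> real" where
  "W1 \<mu> \<nu> = enn2real (INF \<pi> \<in> couplings \<mu> \<nu>. \<integral>\<^sup>+ p. ennreal (dist (fst p) (snd p)) \<partial>\<pi>)"

definition Fmed :: "nat \<Rightarrow> (nat \<Rightarrow> real) \<Rightarrow> (nat \<Rightarrow> 'a::metric_space measure) \<Rightarrow> 'a measure \<Rightarrow> real" where
  "Fmed N l \<nu> \<mu> = (\<Sum>i<N. l i * W1 (\<nu> i) \<mu>)"

definition Med :: "nat \<Rightarrow> (nat \<Rightarrow> real) \<Rightarrow> (nat \<Rightarrow> 'a::metric_space measure) \<Rightarrow> 'a measure set" where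
  "Med N l \<nu> = {\<mu> \<in> P1. \<forall>\<mu>' \<in> P1. Fmed N l \<nu> \<mu> \<le> Fmed N l \<nu> \<mu>'}"

definition narrow_conv :: "(nat \<Rightarrow> 'a::metric_space measure) \<Rightarrow> 'a measure \<Rightarrow> bool" where
  "narrow_conv \<mu>s \<mu> \<longleftrightarrow> (\<forall>f::'a \<Rightarrow> real. continuous_on UNIV f \<and> bounded (range f) \<longrightarrow>
      (\<lambda>n. \<integral>x. f x \<partial>(\<mu>s n)) \<longlonglongrightarrow> (\<integral>x. f x \<partial>\<mu>))"

definition gamma_conv_narrow :: "(nat \<Rightarrow> 'a::metric_space measure \<Rightarrow> real) \<Rightarrow> ('a measure \<Rightarrow> real) \<Rightarrow> bool" where
  "gamma_conv_narrow Fs F \<longleftrightarrow>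
     (\<forall>\<mu> \<in> P1. \<forall>\<mu>s. (\<forall>n. \<mu>s n \<in> P1) \<and> narrow_conv \<mu>s \<mu> \<longrightarrow>
         ereal (F \<mu>) \<le> liminf (\<lambda>n. ereal (Fs n (\<mu>s n)))) \<and>
     (\<forall>\<mu> \<in> P1. \<exists>\<mu>s. (\<forall>n. \<mu>s n \<in> P1) \<and> narrow_conv \<mu>s \<mu> \<and>
         limsup (\<lambda>n. ereal (Fs n (\<mu>s n))) \<le> ereal (F \<mu>))"

definition narrow_cluster_point :: "(nat \<Rightarrow> 'a::metric_space measure) \<Rightarrow> 'a measure \<Rightarrow> bool" where
  "narrow_cluster_point \<mu>s \<mu> \<longleftrightarrow> (\<exists>r. strict_mono r \<and> narrow_conv (\<mu>s \<circ> r) \<mu>)"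

end

theory Submission
  imports Defs
begin

lemma proper_compact:
  assumes "proper_space TYPE('a::metric_space)"
  shows "compact (cball (x::'a) r)"
  using assms unfolding proper_space_def by blast

lemma proper_net:
  assumes "proper_space TYPE('a::metric_space)" and "e > 0"
  shows "\<exists>k. finite k \<and> k \<subseteq> cball (x0::'a) R \<and> cball x0 R \<subseteq> (\<Union>x\<in>k. ball x e)"
  using seq_compact_imp_totally_bounded[OF compact_imp_seq_compact[OF proper_compact[OF assms(1)]]] assms(2)
  by blast

lemma proper_dense:
  assumes "proper_space TYPE('a::metric_space)"
  shows "\<exists>D::'a set. countable D \<and> (\<forall>x e. e > 0 \<longrightarrow> (\<exists>d\<in>D. dist x d < e))"
proof -
  obtain x0 :: 'a where True by blast
  have "\<forall>n::nat. \<exists>k. finite k \<and> k \<subseteq> cball x0 (real n) \<and> cball x0 (real n) \<subseteq> (\<Union>x\<in>k. ball x (1/(Suc n)))"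
    using proper_net[OF assms] by simp
  then obtain k where k: "\<And>n. finite (k n)" "\<And>n. cball x0 (real n) \<subseteq> (\<Union>x\<in>k n. ball x (1/(Suc n)))"
    by metis
  define D where "D = (\<Union>n. k n)"
  have "countable D" unfolding D_def using k(1) by (auto intro: countable_finite)
  moreover have "\<exists>d\<in>D. dist x d < e" if "e > 0" for x e
  proof -
    obtain n1 :: nat where n1: "dist x0 x \<le> n1" using real_arch_simple by blast
    obtain n2 :: nat where n2: "1 / Suc n2 < e" using \<open>e>0\<close>
      by (metis nat_approx_posE)
    define n where "n = max n1 n2"
    have "x \<in> cball x0 (real n)" using n1 unfolding n_def by auto
    then obtain d where d: "d \<in> k n" "dist d x < 1/(Suc n)" using k(2)[of n] by auto
    have "1/(Suc n) \<le> 1 / Suc n2" unfolding n_def by (simp add: frac_le)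
    then show ?thesis using d n2 unfolding D_def by (auto simp: dist_commute intro!: bexI[of _ d])
  qed
  ultimately show ?thesis by blast
qed

lemma proper_sets_prod:
  assumes "proper_space TYPE('a::metric_space)"
  shows "sets (borel \<Otimes>\<^sub>M borel :: ('a \<times> 'a) measure) = sets borel"
proof
  show "sets (borel \<Otimes>\<^sub>M borel :: ('a \<times> 'a) measure) \<subseteq> sets borel"
  proof (rule sets_pair_in_sets)
    fix a b :: "'a set" assume ab: "a \<in> sets borel" "b \<in> sets borel"
    have m1: "fst \<in> borel_measurable (borel :: ('a\<times>'a) measure)"
      by (intro borel_measurable_continuous_onI continuous_intros)
    have m2: "snd \<in> borel_measurable (borel :: ('a\<times>'a) measure)"
      by (intro borel_measurable_continuous_onI continuous_intros)
    have "a \<times> b = (fst -` a \<inter> space borel) \<inter> (snd -` b \<inter> space borel)" by auto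
    also have "\<dots> \<in> sets borel" using measurable_sets[OF m1 ab(1)] measurable_sets[OF m2 ab(2)] by auto
    finally show "a \<times> b \<in> sets borel" .
  qed
next
  obtain D :: "'a set" where D: "countable D" "\<And>x e. e > 0 \<Longrightarrow> \<exists>d\<in>D. dist x d < e"
    using proper_dense[OF assms] by blast
  define B where "B = (\<lambda>(d,d',n::nat). ball d (1/Suc n) \<times> ball d' (1/Suc n)) ` (D \<times> D \<times> UNIV)"
  have cB: "countable B" unfolding B_def using D(1) by auto
  have Bs: "b \<in> sets (borel \<Otimes>\<^sub>M borel)" if "b \<in> B" for b
    using that unfolding B_def by auto
  have op: "S \<in> sets (borel \<Otimes>\<^sub>M borel)" if "open S" for S :: "('a\<times>'a) set"
  proof -
    have "S = \<Union>{b\<in>B. b \<subseteq> S}"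
    proof
      show "S \<subseteq> \<Union>{b\<in>B. b \<subseteq> S}"
      proof
        fix z assume "z \<in> S"
        obtain x y where z: "z = (x,y)" by force
        obtain e where e: "e > 0" "\<And>w. dist w z < e \<Longrightarrow> w \<in> S"
          using \<open>open S\<close> \<open>z\<in>S\<close> unfolding open_dist by blast
        obtain n :: nat where n: "1 / Suc n < e / 4" using e(1)
          by (metis nat_approx_posE zero_less_divide_iff zero_less_numeral)
        obtain d where d: "d \<in> D" "dist x d < 1/Suc n" using D(2)[of "1/Suc n" x] by auto
        obtain d' where d': "d' \<in> D" "dist y d' < 1/Suc n" using D(2)[of "1/Suc n" y] by auto
        define b where "b = ball d (1/Suc n) \<times> ball d' (1/Suc n)"
        have "b \<in> B" unfolding b_def B_def using d d' by force
        moreover have "z \<in> b" using d d' unfolding b_def z by (auto simp: dist_commute)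
        moreover have "b \<subseteq> S"
        proof
          fix w assume "w \<in> b"
          then obtain u v where w: "w = (u,v)" "dist d u < 1/Suc n" "dist d' v < 1/Suc n"
            unfolding b_def by auto
          have "dist u x < 2/Suc n" using w(2) d(2) dist_triangle3[of u x d] by (simp add: dist_commute)
          moreover have "dist v y < 2/Suc n" using w(3) d'(2) dist_triangle3[of v y d'] by (simp add: dist_commute)
          ultimately have "dist w z \<le> dist u x + dist v y" unfolding w z dist_Pair_Pair
            by (intro sqrt_sum_squares_le_sum_abs[THEN order_trans]) auto
          also have "\<dots> < e" using \<open>dist u x < 2/Suc n\<close> \<open>dist v y < 2/Suc n\<close> n by linarith
          finally show "w \<in> S" using e(2) by auto
        qed
        ultimately show "z \<in> \<Union>{b\<in>B. b \<subseteq> S}" by blast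
      qed
    qed auto
    also have "\<dots> \<in> sets (borel \<Otimes>\<^sub>M borel)"
      using cB Bs by (intro sets.countable_Union) (auto intro: countable_subset)
    finally show ?thesis .
  qed
  show "sets borel \<subseteq> sets (borel \<Otimes>\<^sub>M borel :: ('a \<times> 'a) measure)"
    unfolding sets_borel
    by (rule sets.sigma_sets_subset') (use op in auto)
qed

definition cost :: "('a::metric_space \<times> 'a) measure \<Rightarrow> ennreal" where
  "cost \<pi> = (\<integral>\<^sup>+ p. ennreal (dist (fst p) (snd p)) \<partial>\<pi>)"

definition Wi :: "'a::metric_space measure \<Rightarrow> 'a measure \<Rightarrow> ennreal" where
  "Wi \<mu> \<nu> = (INF \<pi> \<in> couplings \<mu> \<nu>. cost \<pi>)"

lemma ennreal_dist_triangle: "ennreal (dist x z) \<le> ennreal (dist x y) + ennreal (dist y z)"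
  by (metis dist_triangle zero_le_dist ennreal_leI ennreal_plus)

lemma cont_ennreal_meas:
  assumes "continuous_on UNIV (f :: 'b::topological_space \<Rightarrow> real)"
  shows "(\<lambda>x. ennreal (f x)) \<in> borel_measurable borel"
  using borel_measurable_continuous_onI[OF assms] by measurable

lemma dist_ennreal_meas: "(\<lambda>x. ennreal (dist (y::'a::metric_space) x)) \<in> borel_measurable borel"
  by (intro cont_ennreal_meas continuous_intros)

lemma W1_Wi: "W1 \<mu> \<nu> = enn2real (Wi \<mu> \<nu>)"
  unfolding W1_def Wi_def cost_def ..

lemma P1D:
  assumes "\<mu> \<in> P1"
  shows "prob_space \<mu>" "sets \<mu> = sets borel" "space \<mu> = UNIV"
  using assms unfolding P1_def by (auto dest: sets_eq_imp_space_eq)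

lemma measurable_P1[measurable_cong]:
  assumes "\<mu> \<in> P1" shows "measurable \<mu> N = measurable borel N"
  using P1D[OF assms] by (intro measurable_cong_sets) auto

lemma P1_nn_finite:
  assumes "\<mu> \<in> P1"
  shows "(\<integral>\<^sup>+ x. ennreal (dist y x) \<partial>\<mu>) < \<infinity>"
proof -
  obtain x0 where i: "integrable \<mu> (\<lambda>x. dist x0 x)" using assms unfolding P1_def by auto
  interpret prob_space \<mu> using P1D[OF assms] by auto
  have m: "(\<lambda>x. dist x0 x) \<in> borel_measurable \<mu>"
    using P1D[OF assms] by (subst measurable_cong_sets[of _ borel _ borel]) (auto intro!: borel_measurable_continuous_onI continuous_intros)
  have "(\<integral>\<^sup>+ x. ennreal (dist y x) \<partial>\<mu>) \<le> (\<integral>\<^sup>+ x. ennreal (dist y x0) + ennreal (dist x0 x) \<partial>\<mu>)"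
    by (intro nn_integral_mono ennreal_dist_triangle)
  also have "\<dots> = ennreal (dist y x0) + (\<integral>\<^sup>+ x. ennreal (dist x0 x) \<partial>\<mu>)"
    using m by (subst nn_integral_add) (auto simp: emeasure_space_1)
  also have "\<dots> < \<infinity>"
    using i by (simp add: integrable_iff_bounded less_top[symmetric])
  finally show ?thesis .
qed

lemma couplingsD:
  assumes "\<pi> \<in> couplings \<mu> \<nu>"
  shows "prob_space \<pi>" "sets \<pi> = sets borel" "distr \<pi> borel fst = \<mu>" "distr \<pi> borel snd = \<nu>"
    "space \<pi> = UNIV"
  using assms unfolding couplings_def by (auto dest: sets_eq_imp_space_eq)

lemma couplings_measurable:
  assumes "\<pi> \<in> couplings \<mu> \<nu>" shows "measurable \<pi> N = measurable borel N"
  using couplingsD[OF assms] by (intro measurable_cong_sets) auto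

lemma couplings_fst_integral:
  assumes "\<pi> \<in> couplings \<mu> \<nu>" "f \<in> borel_measurable borel"
  shows "(\<integral>\<^sup>+ p. f (fst p) \<partial>\<pi>) = (\<integral>\<^sup>+ x. f x \<partial>\<mu>)"
proof -
  have mf: "fst \<in> measurable \<pi> borel"
    using assms(1) by (simp add: couplings_measurable) (intro borel_measurable_continuous_onI continuous_intros)
  have "(\<integral>\<^sup>+ x. f x \<partial>\<mu>) = (\<integral>\<^sup>+ x. f x \<partial>distr \<pi> borel fst)" using couplingsD(3)[OF assms(1)] by simp
  also have "\<dots> = (\<integral>\<^sup>+ p. f (fst p) \<partial>\<pi>)" using mf assms(2) by (intro nn_integral_distr) auto
  finally show ?thesis ..
qed

lemma couplings_snd_integral:
  assumes "\<pi> \<in> couplings \<mu> \<nu>" "f \<in> borel_measurable borel"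
  shows "(\<integral>\<^sup>+ p. f (snd p) \<partial>\<pi>) = (\<integral>\<^sup>+ x. f x \<partial>\<nu>)"
proof -
  have mf: "snd \<in> measurable \<pi> borel"
    using assms(1) by (simp add: couplings_measurable) (intro borel_measurable_continuous_onI continuous_intros)
  have "(\<integral>\<^sup>+ x. f x \<partial>\<nu>) = (\<integral>\<^sup>+ x. f x \<partial>distr \<pi> borel snd)" using couplingsD(4)[OF assms(1)] by simp
  also have "\<dots> = (\<integral>\<^sup>+ p. f (snd p) \<partial>\<pi>)" using mf assms(2) by (intro nn_integral_distr) auto
  finally show ?thesis ..
qed

lemma product_coupling:
  assumes "proper_space TYPE('a::metric_space)" "\<mu> \<in> P1" "\<nu> \<in> P1"
  shows "(\<mu> \<Otimes>\<^sub>M \<nu>) \<in> couplings \<mu> (\<nu>::'a measure)" "cost (\<mu> \<Otimes>\<^sub>M \<nu>) < \<infinity>"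
proof -
  interpret m: prob_space \<mu> using P1D[OF assms(2)] by auto
  interpret n: prob_space \<nu> using P1D[OF assms(3)] by auto
  interpret pair_prob_space \<mu> \<nu> ..
  have s: "sets (\<mu> \<Otimes>\<^sub>M \<nu>) = sets borel"
    using proper_sets_prod[OF assms(1)] P1D(2)[OF assms(2)] P1D(2)[OF assms(3)]
    by (metis sets_pair_measure_cong)
  have "distr (\<mu> \<Otimes>\<^sub>M \<nu>) borel fst = distr (\<mu> \<Otimes>\<^sub>M \<nu>) \<mu> fst"
    using P1D(2)[OF assms(2)] by (intro distr_cong) auto
  also have "\<dots> = \<mu>" using n.distr_pair_fst .
  finally have 1: "distr (\<mu> \<Otimes>\<^sub>M \<nu>) borel fst = \<mu>" .
  have "distr (\<mu> \<Otimes>\<^sub>M \<nu>) borel snd = distr (\<mu> \<Otimes>\<^sub>M \<nu>) \<nu> snd"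
    using P1D(2)[OF assms(3)] by (intro distr_cong) auto
  also have "\<dots> = \<nu>"
  proof (intro measure_eqI)
    fix A assume A: "A \<in> sets (distr (\<mu> \<Otimes>\<^sub>M \<nu>) \<nu> snd)"
    from A have "emeasure (distr (\<mu> \<Otimes>\<^sub>M \<nu>) \<nu> snd) A = emeasure (\<mu> \<Otimes>\<^sub>M \<nu>) (space \<mu> \<times> A)"
      by (auto simp add: emeasure_distr space_pair_measure dest: sets.sets_into_space intro!: arg_cong2[where f=emeasure])
    also have "\<dots> = emeasure \<mu> (space \<mu>) * emeasure \<nu> A"
      using A by (intro n.emeasure_pair_measure_Times) auto
    finally show "emeasure (distr (\<mu> \<Otimes>\<^sub>M \<nu>) \<nu> snd) A = emeasure \<nu> A"
      by (simp add: m.emeasure_space_1)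
  qed simp
  finally have 2: "distr (\<mu> \<Otimes>\<^sub>M \<nu>) borel snd = \<nu>" .
  show c: "(\<mu> \<Otimes>\<^sub>M \<nu>) \<in> couplings \<mu> \<nu>"
    unfolding couplings_def using s 1 2 prob_space_axioms by auto
  obtain x0 :: 'a where True by blast
  have "cost (\<mu> \<Otimes>\<^sub>M \<nu>) \<le> (\<integral>\<^sup>+ p. ennreal (dist (fst p) x0) + ennreal (dist x0 (snd p)) \<partial>(\<mu> \<Otimes>\<^sub>M \<nu>))"
    unfolding cost_def
    by (intro nn_integral_mono ennreal_dist_triangle)
  also have "\<dots> = (\<integral>\<^sup>+ p. ennreal (dist x0 (fst p)) \<partial>(\<mu> \<Otimes>\<^sub>M \<nu>)) + (\<integral>\<^sup>+ p. ennreal (dist x0 (snd p)) \<partial>(\<mu> \<Otimes>\<^sub>M \<nu>))"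
    using c by (subst nn_integral_add) (auto simp: couplings_measurable dist_commute intro!: borel_measurable_continuous_onI continuous_intros)
  also have "\<dots> = (\<integral>\<^sup>+ x. ennreal (dist x0 x) \<partial>\<mu>) + (\<integral>\<^sup>+ x. ennreal (dist x0 x) \<partial>\<nu>)"
    using couplings_fst_integral[OF c dist_ennreal_meas] couplings_snd_integral[OF c dist_ennreal_meas] by simp
  also have "\<dots> < \<infinity>" using P1_nn_finite[OF assms(2)] P1_nn_finite[OF assms(3)] by simp
  finally show "cost (\<mu> \<Otimes>\<^sub>M \<nu>) < \<infinity>" .
qed

lemma Wi_finite:
  assumes "proper_space TYPE('a::metric_space)" "\<mu> \<in> P1" "\<nu> \<in> P1"
  shows "Wi \<mu> (\<nu>::'a measure) < \<infinity>"
  using product_coupling[OF assms] unfolding Wi_def by (meson INF_lower le_less_trans)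

lemma W1_eq:
  assumes "proper_space TYPE('a::metric_space)" "\<mu> \<in> P1" "\<nu> \<in> P1"
  shows "ennreal (W1 \<mu> (\<nu>::'a measure)) = Wi \<mu> \<nu>"
  using Wi_finite[OF assms] unfolding W1_Wi by (simp add: less_top)

lemma W1_nonneg: "W1 \<mu> \<nu> \<ge> 0"
  unfolding W1_def by simp

lemma W1_le_cost:
  assumes "proper_space TYPE('a::metric_space)" "\<mu> \<in> P1" "\<nu> \<in> P1" "\<pi> \<in> couplings \<mu> (\<nu>::'a measure)"
  shows "ennreal (W1 \<mu> \<nu>) \<le> cost \<pi>"
  using assms W1_eq[OF assms(1-3)] unfolding Wi_def by (simp add: INF_lower)

lemma W1_approx:
  assumes "proper_space TYPE('a::metric_space)" "\<mu> \<in> P1" "\<nu> \<in> P1" "e > 0"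
  shows "\<exists>\<pi> \<in> couplings \<mu> (\<nu>::'a measure). cost \<pi> < ennreal (W1 \<mu> \<nu> + e)"
proof -
  have "Wi \<mu> \<nu> < ennreal (W1 \<mu> \<nu> + e)"
  proof -
    have "ennreal (W1 \<mu> \<nu>) < ennreal (W1 \<mu> \<nu> + e)"
      using assms(4) W1_nonneg[of \<mu> \<nu>] by (intro ennreal_lessI) auto
    then show ?thesis using W1_eq[OF assms(1-3)] by simp
  qed
  then show ?thesis unfolding Wi_def by (simp add: INF_less_iff)
qed

lemma swap_coupling:
  assumes "\<pi> \<in> couplings \<mu> \<nu>"
  shows "distr \<pi> borel (\<lambda>p. (snd p, fst p)) \<in> couplings \<nu> (\<mu>::'a::metric_space measure)"
    "cost (distr \<pi> borel (\<lambda>p. (snd p, fst p))) = cost \<pi>"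
proof -
  have ms: "(\<lambda>p::'a\<times>'a. (snd p, fst p)) \<in> measurable \<pi> borel"
    using assms by (simp add: couplings_measurable) (intro borel_measurable_continuous_onI continuous_intros)
  have mf: "fst \<in> measurable (borel::('a\<times>'a) measure) borel" "snd \<in> measurable (borel::('a\<times>'a) measure) borel"
    by (intro borel_measurable_continuous_onI continuous_intros)+
  have "distr (distr \<pi> borel (\<lambda>p. (snd p, fst p))) borel fst = distr \<pi> borel (fst \<circ> (\<lambda>p. (snd p, fst p)))"
    using ms mf by (intro distr_distr) auto
  also have "\<dots> = distr \<pi> borel snd" by (simp add: comp_def)
  also have "\<dots> = \<nu>" using couplingsD[OF assms] by simp
  finally have 1: "distr (distr \<pi> borel (\<lambda>p. (snd p, fst p))) borel fst = \<nu>" .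
  have "distr (distr \<pi> borel (\<lambda>p. (snd p, fst p))) borel snd = distr \<pi> borel (snd \<circ> (\<lambda>p. (snd p, fst p)))"
    using ms mf by (intro distr_distr) auto
  also have "\<dots> = distr \<pi> borel fst" by (simp add: comp_def)
  also have "\<dots> = \<mu>" using couplingsD[OF assms] by simp
  finally have 2: "distr (distr \<pi> borel (\<lambda>p. (snd p, fst p))) borel snd = \<mu>" .
  have "prob_space (distr \<pi> borel (\<lambda>p. (snd p, fst p)))"
    using couplingsD(1)[OF assms] ms by (intro prob_space.prob_space_distr) auto
  then show "distr \<pi> borel (\<lambda>p. (snd p, fst p)) \<in> couplings \<nu> \<mu>"
    unfolding couplings_def using 1 2 by auto
  have "cost (distr \<pi> borel (\<lambda>p. (snd p, fst p))) = (\<integral>\<^sup>+ p. ennreal (dist (snd p) (fst p)) \<partial>\<pi>)"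
  proof -
    have "(\<lambda>p::'a\<times>'a. ennreal (dist (fst p) (snd p))) \<in> borel_measurable borel"
      by (intro cont_ennreal_meas continuous_intros)
    then show ?thesis unfolding cost_def using ms
      by (subst nn_integral_distr) auto
  qed
  also have "\<dots> = cost \<pi>" unfolding cost_def by (intro nn_integral_cong) (metis dist_commute)
  finally show "cost (distr \<pi> borel (\<lambda>p. (snd p, fst p))) = cost \<pi>" .
qed

lemma Wi_sym_le: "Wi \<nu> \<mu> \<le> Wi \<mu> (\<nu>::'a::metric_space measure)"
  unfolding Wi_def
proof (rule INF_greatest)
  fix \<pi> assume "\<pi> \<in> couplings \<mu> \<nu>"
  then have "(INF \<pi>\<in>couplings \<nu> \<mu>. cost \<pi>) \<le> cost (distr \<pi> borel (\<lambda>p. (snd p, fst p)))"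
    by (intro INF_lower swap_coupling(1))
  then show "(INF \<pi>\<in>couplings \<nu> \<mu>. cost \<pi>) \<le> cost \<pi>"
    using swap_coupling(2)[OF \<open>\<pi> \<in> couplings \<mu> \<nu>\<close>] by simp
qed

lemma W1_sym: "W1 \<mu> \<nu> = W1 \<nu> (\<mu>::'a::metric_space measure)"
proof -
  have "Wi \<mu> \<nu> = Wi \<nu> \<mu>" by (rule antisym) (rule Wi_sym_le)+
  then show ?thesis unfolding W1_Wi by simp
qed

definition PU :: "'a::metric_space \<Rightarrow> real \<Rightarrow> real \<Rightarrow> nat \<Rightarrow> (nat \<Rightarrow> 'a) \<Rightarrow> (nat \<Rightarrow> 'a \<Rightarrow> real) \<Rightarrow> bool" where
  "PU x0 R e m b ch \<longleftrightarrow> (\<forall>j x. 0 \<le> ch j x) \<and> (\<forall>x. (\<Sum>j\<le>m. ch j x) = 1) \<and> (\<forall>j. continuous_on UNIV (ch j))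
     \<and> (\<forall>j\<in>{1..m}. \<forall>x. ch j x \<noteq> 0 \<longrightarrow> dist x (b j) < e) \<and> (\<forall>j\<in>{1..m}. b j \<in> cball x0 R)
     \<and> (\<forall>x. ch 0 x \<noteq> 0 \<longrightarrow> R < dist x0 x)"

lemma partition_unity:
  assumes "proper_space TYPE('a::metric_space)" "e > 0"
  shows "\<exists>m b ch. PU (x0::'a) R e m b ch"
proof -
  from proper_net[OF assms, of x0 R] obtain k where k: "finite k" "k \<subseteq> cball x0 R" "cball x0 R \<subseteq> (\<Union>x\<in>k. ball x e)"
    by blast
  obtain bs where bs: "set bs = k" using finite_list[OF k(1)] by blast
  define m where "m = length bs"
  define b where "b = (\<lambda>j. bs ! (j - 1))"
  define \<psi> where "\<psi> = (\<lambda>j x. if j = 0 then max 0 (dist x0 x - R) else max 0 (e - dist x (b j)))"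
  define S where "S = (\<lambda>x. \<Sum>j\<le>m. \<psi> j x)"
  have \<psi>0: "0 \<le> \<psi> j x" for j x unfolding \<psi>_def by auto
  have Spos: "S x > 0" for x
  proof -
    have "\<exists>j\<le>m. \<psi> j x > 0"
    proof (cases "R < dist x0 x")
      case True then show ?thesis by (intro exI[of _ 0]) (auto simp: \<psi>_def)
    next
      case False
      then have "x \<in> cball x0 R" by auto
      then obtain y where "y \<in> k" "dist y x < e" using k(3) by auto
      then obtain i where i: "i < length bs" "bs ! i = y" using bs by (metis in_set_conv_nth)
      show ?thesis using i \<open>dist y x < e\<close>
        by (intro exI[of _ "Suc i"]) (auto simp: \<psi>_def b_def m_def dist_commute[of y x])
    qed
    then obtain j where "j \<le> m" "\<psi> j x > 0" by blast
    then have "\<psi> j x \<le> S x" unfolding S_def using \<psi>0 by (intro member_le_sum) auto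
    then show ?thesis using \<open>\<psi> j x > 0\<close> by linarith
  qed
  define ch where "ch = (\<lambda>j x. \<psi> j x / S x)"
  have cont\<psi>: "continuous_on UNIV (\<psi> j)" for j
    unfolding \<psi>_def by (cases "j = 0") (auto intro!: continuous_intros)
  have contS: "continuous_on UNIV S" unfolding S_def using cont\<psi> by (intro continuous_intros) auto
  have "PU x0 R e m b ch"
    unfolding PU_def
  proof (intro conjI allI ballI impI)
    fix j x show "0 \<le> ch j x" unfolding ch_def using \<psi>0 Spos[of x] by auto
  next
    fix x show "(\<Sum>j\<le>m. ch j x) = 1" unfolding ch_def using Spos[of x]
      by (simp add: sum_divide_distrib[symmetric] S_def)
  next
    fix j show "continuous_on UNIV (ch j)" unfolding ch_def
      using cont\<psi> contS Spos by (intro continuous_on_divide) (auto, metis less_irrefl)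
  next
    fix j x assume "j \<in> {1..m}" "ch j x \<noteq> 0"
    then show "dist x (b j) < e" unfolding ch_def \<psi>_def by (auto split: if_splits)
  next
    fix j assume "j \<in> {1..m}"
    then have "bs ! (j - 1) \<in> k" using bs unfolding m_def by auto
    then show "b j \<in> cball x0 R" using k(2) unfolding b_def by auto
  next
    fix x assume "ch 0 x \<noteq> 0"
    then show "R < dist x0 x" unfolding ch_def \<psi>_def by (auto split: if_splits)
  qed
  then show ?thesis by blast
qed

lemma ennreal_w_le: "(1 / (v::ennreal)) * (X * v) \<le> X"
proof (cases "v = 0")
  case True then show ?thesis by simp
next
  case False
  show ?thesis
  proof (cases "v = top")
    case True then show ?thesis by simp
  next
    case False
    then have "(1 / v) * (X * v) = X" using \<open>v \<noteq> 0\<close>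
      by (metis ennreal_mult_divide_eq ennreal_times_divide mult.commute mult.right_neutral)
    then show ?thesis by simp
  qed
qed

lemma ennreal_w_le': "(1 / (v::ennreal)) * (v * X) \<le> X"
  using ennreal_w_le[of v X] by (simp add: mult.commute)

lemma ennreal_w_eq:
  assumes "v = 0 \<Longrightarrow> X = 0" "v \<noteq> top"
  shows "(1 / (v::ennreal)) * (X * v) = X"
proof (cases "v = 0")
  case True then show ?thesis using assms by simp
next
  case False
  then show ?thesis using assms(2)
    by (metis ennreal_mult_divide_eq ennreal_times_divide mult.commute mult.right_neutral)
qed

lemma tail_small:
  assumes "\<mu> \<in> P1" "e > 0"
  shows "\<exists>R>0. (\<integral>\<^sup>+ x. ennreal (dist x0 x) * indicator {x. R < dist x0 x} x \<partial>\<mu>) < ennreal e"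
proof -
  define f where "f = (\<lambda>(n::nat) x. ennreal (dist x0 x) * indicator {x. real n < dist x0 x} x)"
  have mf: "f n \<in> borel_measurable \<mu>" for n
  proof -
    have "{x. real n < dist x0 x} \<in> sets borel"
      by (intro borel_open open_Collect_less continuous_intros)
    then show ?thesis unfolding f_def using measurable_P1[OF assms(1)] dist_ennreal_meas[of x0]
      by (simp add: measurable_P1[OF assms(1)])
  qed
  have dec: "decseq f"
    unfolding f_def by (intro decseq_SucI le_funI) (auto intro!: mult_left_mono split: split_indicator)
  have fin: "(\<integral>\<^sup>+ x. f i x \<partial>\<mu>) < \<infinity>" for i
  proof -
    have "(\<integral>\<^sup>+ x. f i x \<partial>\<mu>) \<le> (\<integral>\<^sup>+ x. ennreal (dist x0 x) \<partial>\<mu>)"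
      unfolding f_def by (intro nn_integral_mono) (auto split: split_indicator)
    then show ?thesis using P1_nn_finite[OF assms(1)] by (simp add: le_less_trans)
  qed
  have inf0: "(INF i. f i x) = 0" for x
  proof -
    obtain n :: nat where "dist x0 x \<le> n" using real_arch_simple by blast
    then have "f n x = 0" unfolding f_def by auto
    then show ?thesis by (metis INF_lower UNIV_I le_zero_eq)
  qed
  have "(INF i. integral\<^sup>N \<mu> (f i)) = 0"
    using nn_integral_monotone_convergence_INF_decseq[OF dec mf fin] inf0 by simp
  then obtain n where n: "integral\<^sup>N \<mu> (f n) < ennreal e" using assms(2)
    by (metis INF_less_iff ennreal_less_zero_iff)
  have "(\<integral>\<^sup>+ x. ennreal (dist x0 x) * indicator {x. real (Suc n) < dist x0 x} x \<partial>\<mu>) \<le> integral\<^sup>N \<mu> (f n)"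
    unfolding f_def by (intro nn_integral_mono) (auto split: split_indicator)
  then show ?thesis using n by (intro exI[of _ "real (Suc n)"]) auto
qed

lemma nn_integral_pair_sep:
  assumes "sigma_finite_measure M" "sigma_finite_measure N"
    "f \<in> borel_measurable M" "g \<in> borel_measurable N"
  shows "(\<integral>\<^sup>+z. f (fst z) * g (snd z) \<partial>(M \<Otimes>\<^sub>M N)) = (\<integral>\<^sup>+x. f x \<partial>M) * (\<integral>\<^sup>+y. g y \<partial>N)"
proof -
  interpret M: sigma_finite_measure M by fact
  interpret N: sigma_finite_measure N by fact
  interpret pair_sigma_finite M N ..
  have "(\<integral>\<^sup>+z. f (fst z) * g (snd z) \<partial>(M \<Otimes>\<^sub>M N)) = (\<integral>\<^sup>+x. \<integral>\<^sup>+y. f x * g y \<partial>N \<partial>M)"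
    using assms(3,4) by (subst N.nn_integral_fst[symmetric]) auto
  also have "\<dots> = (\<integral>\<^sup>+x. f x * (\<integral>\<^sup>+y. g y \<partial>N) \<partial>M)"
    using assms(4) by (intro nn_integral_cong nn_integral_cmult) auto
  also have "\<dots> = (\<integral>\<^sup>+x. f x \<partial>M) * (\<integral>\<^sup>+y. g y \<partial>N)"
    using assms(3) by (rule nn_integral_multc)
  finally show ?thesis .
qed

lemma PU_D:
  assumes "PU x0 R e m b ch"
  shows "\<And>j x. 0 \<le> ch j x" "\<And>x. (\<Sum>j\<le>m. ch j x) = 1" "\<And>j. continuous_on UNIV (ch j)"
    "\<And>j x. j \<in> {1..m} \<Longrightarrow> ch j x \<noteq> 0 \<Longrightarrow> dist x (b j) < e" "\<And>j. j \<in> {1..m} \<Longrightarrow> b j \<in> cball x0 R"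
    "\<And>x. ch 0 x \<noteq> 0 \<Longrightarrow> R < dist x0 x"
  using assms unfolding PU_def by auto

lemma PU_le1:
  assumes "PU x0 R e m b ch" "j \<le> m"
  shows "ch j x \<le> 1"
proof -
  have "ch j x \<le> (\<Sum>j\<le>m. ch j x)" using assms PU_D(1)[OF assms(1)] by (intro member_le_sum) auto
  then show ?thesis using PU_D(2)[OF assms(1)] by simp
qed

lemma cont_fst_comp: "continuous_on UNIV g \<Longrightarrow> continuous_on UNIV (\<lambda>p. g (fst p))"
  by (rule continuous_on_compose2[of UNIV g UNIV fst]) (auto intro: continuous_intros)

lemma cont_snd_comp: "continuous_on UNIV g \<Longrightarrow> continuous_on UNIV (\<lambda>p. g (snd p))"
  by (rule continuous_on_compose2[of UNIV g UNIV snd]) (auto intro: continuous_intros)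

lemma coupling_meas:
  assumes "\<pi> \<in> couplings \<mu> \<nu>" "continuous_on UNIV (f :: 'a::metric_space \<times> 'a \<Rightarrow> real)"
  shows "(\<lambda>p. ennreal (f p)) \<in> borel_measurable \<pi>"
  using assms by (simp add: couplings_measurable cont_ennreal_meas)

lemma ptw_ennreal:
  fixes a b D D1 B1 B2 D3 :: real
  assumes "0 \<le> a" "0 \<le> b" "0 \<le> D" "0 \<le> D1" "0 \<le> B1" "0 \<le> B2" "0 \<le> D3"
    "a \<noteq> 0 \<Longrightarrow> b \<noteq> 0 \<Longrightarrow> D \<le> D1 + B1 + B2 + D3"
  shows "ennreal a * ennreal b * ennreal D \<le> ennreal a * ennreal D1 * ennreal b + ennreal a * ennreal B1 * ennreal b
     + ennreal a * (ennreal b * ennreal B2) + ennreal a * (ennreal b * ennreal D3)"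
proof (cases "a = 0 \<or> b = 0")
  case True then show ?thesis by auto
next
  case False
  then have "a * b * D \<le> a * D1 * b + a * B1 * b + a * (b * B2) + a * (b * D3)"
  proof -
    have "a * b * D \<le> a * b * (D1 + B1 + B2 + D3)"
      using assms False by (intro mult_left_mono) auto
    also have "\<dots> = a * D1 * b + a * B1 * b + a * (b * B2) + a * (b * D3)" by (simp add: algebra_simps)
    finally show ?thesis .
  qed
  then have "ennreal (a * b * D) \<le> ennreal (a * D1 * b + a * B1 * b + a * (b * B2) + a * (b * D3))"
    by (rule ennreal_leI)
  moreover have "ennreal (a * b * D) = ennreal a * ennreal b * ennreal D"
    using assms by (simp add: ennreal_mult)
  moreover have "ennreal (a * D1 * b + a * B1 * b + a * (b * B2) + a * (b * D3)) =
     ennreal a * ennreal D1 * ennreal b + ennreal a * ennreal B1 * ennreal b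
     + ennreal a * (ennreal b * ennreal B2) + ennreal a * (ennreal b * ennreal D3)"
    using assms by (simp add: ennreal_mult ennreal_plus)
  ultimately show ?thesis by simp
qed

lemma glue:
  fixes \<mu> \<nu> \<rho> :: "'a::metric_space measure"
  assumes P: "proper_space TYPE('a)" and m: "\<mu> \<in> P1" "\<nu> \<in> P1" "\<rho> \<in> P1"
    and c1: "\<pi>1 \<in> couplings \<mu> \<nu>" and c2: "\<pi>2 \<in> couplings \<nu> \<rho>" and e: "e > 0"
  shows "\<exists>\<sigma> \<in> couplings \<mu> \<rho>. cost \<sigma> \<le> cost \<pi>1 + cost \<pi>2 + ennreal e"
proof -
  obtain x0 :: 'a where True by blast
  obtain R where R: "R > 0" "(\<integral>\<^sup>+ x. ennreal (dist x0 x) * indicator {x. R < dist x0 x} x \<partial>\<nu>) < ennreal (e/4)"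
    using tail_small[OF m(2), of "e/4" x0] e by auto
  obtain M b ch where pu: "PU x0 R (e/4) M b ch" using partition_unity[OF P, of "e/4" x0 R] e by auto
  note ch = PU_D[OF pu]
  interpret p1: prob_space \<pi>1 using couplingsD(1)[OF c1] .
  interpret p2: prob_space \<pi>2 using couplingsD(1)[OF c2] .
  interpret pp: pair_prob_space \<pi>1 \<pi>2 ..
  define PP where "PP = \<pi>1 \<Otimes>\<^sub>M \<pi>2"
  have sPP: "sets PP = sets (borel \<Otimes>\<^sub>M borel :: (('a\<times>'a)\<times>('a\<times>'a)) measure)"
    unfolding PP_def using couplingsD(2)[OF c1] couplingsD(2)[OF c2] by (rule sets_pair_measure_cong)
  have mf1: "(\<lambda>w. ennreal (g (fst w))) \<in> borel_measurable PP" if "continuous_on UNIV g" for g :: "'a\<times>'a \<Rightarrow> real"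
    unfolding PP_def using coupling_meas[OF c1 that] by measurable
  have mf2: "(\<lambda>w. ennreal (g (snd w))) \<in> borel_measurable PP" if "continuous_on UNIV g" for g :: "'a\<times>'a \<Rightarrow> real"
    unfolding PP_def using coupling_meas[OF c2 that] by measurable
  define c where "c = (\<lambda>k y. ennreal (ch k y))"
  define vk where "vk = (\<lambda>k. (\<integral>\<^sup>+ y. c k y \<partial>\<nu>))"
  define dens where "dens = (\<lambda>w::('a\<times>'a)\<times>('a\<times>'a). (\<Sum>k\<le>M. (1 / vk k) * (c k (snd (fst w)) * c k (fst (snd w)))))"
  have mc1: "(\<lambda>w. c k (snd (fst w))) \<in> borel_measurable PP" for k
    unfolding c_def by (intro mf1 cont_snd_comp ch(3))
  have mc2: "(\<lambda>w. c k (fst (snd w))) \<in> borel_measurable PP" for k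
    unfolding c_def by (intro mf2 cont_fst_comp ch(3))
  have mdens: "dens \<in> borel_measurable PP"
    unfolding dens_def using mc1 mc2 by measurable
  define G where "G = (\<lambda>w::('a\<times>'a)\<times>('a\<times>'a). (fst (fst w), snd (snd w)))"
  have mG: "G \<in> measurable PP borel"
  proof -
    have "G \<in> measurable PP (borel \<Otimes>\<^sub>M borel)"
      unfolding G_def PP_def using c1 c2
      by (intro measurable_Pair) (auto simp: couplings_measurable intro!: measurable_compose[OF measurable_fst] measurable_compose[OF measurable_snd] borel_measurable_continuous_onI continuous_intros)
    then show ?thesis using proper_sets_prod[OF P] by (simp cong: measurable_cong_sets)
  qed
  define \<sigma> where "\<sigma> = distr (density PP dens) borel G"
  have int\<sigma>: "(\<integral>\<^sup>+ z. H z \<partial>\<sigma>) = (\<integral>\<^sup>+ w. dens w * H (G w) \<partial>PP)" if "H \<in> borel_measurable borel" for H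
  proof -
    have "(\<integral>\<^sup>+ z. H z \<partial>\<sigma>) = (\<integral>\<^sup>+ w. H (G w) \<partial>density PP dens)"
      unfolding \<sigma>_def using mG that by (intro nn_integral_distr) auto
    also have "\<dots> = (\<integral>\<^sup>+ w. dens w * H (G w) \<partial>PP)"
      using mdens mG that by (intro nn_integral_density) auto
    finally show ?thesis .
  qed
  have mc: "c k \<in> borel_measurable borel" for k
    unfolding c_def by (intro cont_ennreal_meas ch(3))
  have vk1: "vk k = (\<integral>\<^sup>+ p. c k (snd p) \<partial>\<pi>1)" for k
    unfolding vk_def using couplings_snd_integral[OF c1 mc] by simp
  have vk2: "vk k = (\<integral>\<^sup>+ q. c k (fst q) \<partial>\<pi>2)" for k
    unfolding vk_def using couplings_fst_integral[OF c2 mc] by simp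
  have vk_top: "vk k \<noteq> top" if "k \<le> M" for k
  proof -
    have "vk k \<le> (\<integral>\<^sup>+ p. 1 \<partial>\<pi>1)" unfolding vk1 c_def
      using PU_le1[OF pu that] by (intro nn_integral_mono) (auto simp: ennreal_le_1)
    then show ?thesis using p1.emeasure_space_1 by (auto simp: top_unique)
  qed
  have vk0_1: "(\<integral>\<^sup>+ p. f p * c k (snd p) \<partial>\<pi>1) = 0" if "vk k = 0" "f \<in> borel_measurable \<pi>1" for f k
  proof -
    have mck: "(\<lambda>p. c k (snd p)) \<in> borel_measurable \<pi>1"
      unfolding c_def by (intro coupling_meas[OF c1] cont_snd_comp ch(3))
    have "AE p in \<pi>1. c k (snd p) = 0"
      using that(1) unfolding vk1 by (subst nn_integral_0_iff_AE[symmetric]) (use mck in auto)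
    then have "AE p in \<pi>1. f p * c k (snd p) = 0" by eventually_elim simp
    moreover have "(\<lambda>p. f p * c k (snd p)) \<in> borel_measurable \<pi>1" using that(2) mck by measurable
    ultimately show ?thesis using nn_integral_0_iff_AE by blast
  qed
  have vk0_2: "(\<integral>\<^sup>+ q. c k (fst q) * f q \<partial>\<pi>2) = 0" if "vk k = 0" "f \<in> borel_measurable \<pi>2" for f k
  proof -
    have mck: "(\<lambda>p. c k (fst p)) \<in> borel_measurable \<pi>2"
      unfolding c_def by (intro coupling_meas[OF c2] cont_fst_comp ch(3))
    have "AE p in \<pi>2. c k (fst p) = 0"
      using that(1) unfolding vk2 by (subst nn_integral_0_iff_AE[symmetric]) (use mck in auto)
    then have "AE p in \<pi>2. c k (fst p) * f p = 0" by eventually_elim simp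
    moreover have "(\<lambda>p. c k (fst p) * f p) \<in> borel_measurable \<pi>2" using that(2) mck by measurable
    ultimately show ?thesis using nn_integral_0_iff_AE by blast
  qed
  have csum: "(\<Sum>k\<le>M. c k y) = 1" for y
    unfolding c_def using ch(1,2) by (subst sum_ennreal) auto
  have fst1: "fst \<in> measurable \<pi>1 borel" "snd \<in> measurable \<pi>1 borel"
    using c1 by (simp_all add: couplings_measurable) (intro borel_measurable_continuous_onI continuous_intros)+
  have fst2: "fst \<in> measurable \<pi>2 borel" "snd \<in> measurable \<pi>2 borel"
    using c2 by (simp_all add: couplings_measurable) (intro borel_measurable_continuous_onI continuous_intros)+
  have fstb: "fst \<in> measurable (borel :: ('a\<times>'a) measure) borel" "snd \<in> measurable (borel :: ('a\<times>'a) measure) borel"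
    by (intro borel_measurable_continuous_onI continuous_intros)+
  have sfin1: "sigma_finite_measure \<pi>1" "sigma_finite_measure \<pi>2" by unfold_locales
  have marg1: "(\<integral>\<^sup>+ z. f (fst z) \<partial>\<sigma>) = (\<integral>\<^sup>+ x. f x \<partial>\<mu>)" if mf: "f \<in> borel_measurable borel" for f
  proof -
    have m1: "(\<lambda>p. f (fst p) * c k (snd p)) \<in> borel_measurable \<pi>1" for k
      using measurable_compose[OF fst1(1) mf] measurable_compose[OF fst1(2) mc] by measurable
    have m2: "(\<lambda>q. c k (fst q)) \<in> borel_measurable \<pi>2" for k
      using measurable_compose[OF fst2(1) mc] by simp
    have "(\<integral>\<^sup>+ z. f (fst z) \<partial>\<sigma>) = (\<integral>\<^sup>+ w. dens w * f (fst (G w)) \<partial>PP)"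
      using measurable_compose[OF fstb(1) mf] by (intro int\<sigma>) simp
    also have "\<dots> = (\<integral>\<^sup>+ w. (\<Sum>k\<le>M. (1/vk k) * ((f (fst (fst w)) * c k (snd (fst w))) * c k (fst (snd w)))) \<partial>PP)"
      unfolding dens_def G_def sum_distrib_right by (intro nn_integral_cong sum.cong refl) (simp add: ac_simps)
    also have "\<dots> = (\<Sum>k\<le>M. (1/vk k) * (\<integral>\<^sup>+ w. (f (fst (fst w)) * c k (snd (fst w))) * c k (fst (snd w)) \<partial>PP))"
    proof -
      have mm: "(\<lambda>w. (f (fst (fst w)) * c k (snd (fst w))) * c k (fst (snd w))) \<in> borel_measurable PP" for k
        unfolding PP_def using m1[of k] m2[of k] by measurable
      show ?thesis using mm by (subst nn_integral_sum) (auto intro!: sum.cong nn_integral_cmult)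
    qed
    also have "\<dots> = (\<Sum>k\<le>M. (1/vk k) * ((\<integral>\<^sup>+ p. f (fst p) * c k (snd p) \<partial>\<pi>1) * vk k))"
      unfolding PP_def vk2
      by (intro sum.cong refl arg_cong2[where f="(*)"] nn_integral_pair_sep[OF sfin1 m1 m2, simplified])
    also have "\<dots> = (\<Sum>k\<le>M. (\<integral>\<^sup>+ p. f (fst p) * c k (snd p) \<partial>\<pi>1))"
      using vk0_1[OF _ measurable_compose[OF fst1(1) mf]] vk_top by (intro sum.cong refl ennreal_w_eq) auto
    also have "\<dots> = (\<integral>\<^sup>+ p. (\<Sum>k\<le>M. f (fst p) * c k (snd p)) \<partial>\<pi>1)"
      using m1 by (subst nn_integral_sum) auto
    also have "\<dots> = (\<integral>\<^sup>+ p. f (fst p) \<partial>\<pi>1)"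
      by (simp add: sum_distrib_left[symmetric] csum)
    also have "\<dots> = (\<integral>\<^sup>+ x. f x \<partial>\<mu>)" using couplings_fst_integral[OF c1 mf] .
    finally show ?thesis .
  qed
  have marg2: "(\<integral>\<^sup>+ z. f (snd z) \<partial>\<sigma>) = (\<integral>\<^sup>+ x. f x \<partial>\<rho>)" if mf: "f \<in> borel_measurable borel" for f
  proof -
    have m1: "(\<lambda>p. c k (snd p)) \<in> borel_measurable \<pi>1" for k
      using measurable_compose[OF fst1(2) mc] by simp
    have m2: "(\<lambda>q. c k (fst q) * f (snd q)) \<in> borel_measurable \<pi>2" for k
      using measurable_compose[OF fst2(2) mf] measurable_compose[OF fst2(1) mc] by measurable
    have "(\<integral>\<^sup>+ z. f (snd z) \<partial>\<sigma>) = (\<integral>\<^sup>+ w. dens w * f (snd (G w)) \<partial>PP)"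
      using measurable_compose[OF fstb(2) mf] by (intro int\<sigma>) simp
    also have "\<dots> = (\<integral>\<^sup>+ w. (\<Sum>k\<le>M. (1/vk k) * (c k (snd (fst w)) * (c k (fst (snd w)) * f (snd (snd w))))) \<partial>PP)"
      unfolding dens_def G_def sum_distrib_right by (intro nn_integral_cong sum.cong refl) (simp add: ac_simps)
    also have "\<dots> = (\<Sum>k\<le>M. (1/vk k) * (\<integral>\<^sup>+ w. c k (snd (fst w)) * (c k (fst (snd w)) * f (snd (snd w))) \<partial>PP))"
    proof -
      have mm: "(\<lambda>w. c k (snd (fst w)) * (c k (fst (snd w)) * f (snd (snd w)))) \<in> borel_measurable PP" for k
        unfolding PP_def using m1[of k] m2[of k] by measurable
      show ?thesis using mm by (subst nn_integral_sum) (auto intro!: sum.cong nn_integral_cmult)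
    qed
    also have "\<dots> = (\<Sum>k\<le>M. (1/vk k) * ((\<integral>\<^sup>+ q. c k (fst q) * f (snd q) \<partial>\<pi>2) * vk k))"
      unfolding PP_def vk1 using nn_integral_pair_sep[OF sfin1 m1 m2]
      by (intro sum.cong refl) (simp add: mult.commute)
    also have "\<dots> = (\<Sum>k\<le>M. (\<integral>\<^sup>+ q. c k (fst q) * f (snd q) \<partial>\<pi>2))"
      using vk0_2[OF _ measurable_compose[OF fst2(2) mf]] vk_top by (intro sum.cong refl ennreal_w_eq) auto
    also have "\<dots> = (\<integral>\<^sup>+ q. (\<Sum>k\<le>M. c k (fst q) * f (snd q)) \<partial>\<pi>2)"
      using m2 by (subst nn_integral_sum) auto
    also have "\<dots> = (\<integral>\<^sup>+ q. f (snd q) \<partial>\<pi>2)"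
      by (simp add: sum_distrib_right[symmetric] csum)
    also have "\<dots> = (\<integral>\<^sup>+ x. f x \<partial>\<rho>)" using couplings_snd_integral[OF c2 mf] .
    finally show ?thesis .
  qed
  have s\<sigma>: "sets \<sigma> = sets borel" unfolding \<sigma>_def by simp
  have ms\<sigma>: "measurable \<sigma> N = measurable borel N" for N using s\<sigma> by (intro measurable_cong_sets) auto
  have "distr \<sigma> borel fst = \<mu>"
  proof (rule measure_eqI)
    show "sets (distr \<sigma> borel fst) = sets \<mu>" using P1D(2)[OF m(1)] by simp
    fix A assume "A \<in> sets (distr \<sigma> borel fst)"
    then have A: "A \<in> sets borel" by simp
    have "emeasure (distr \<sigma> borel fst) A = (\<integral>\<^sup>+ x. indicator A x \<partial>distr \<sigma> borel fst)" using A by simp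
    also have "\<dots> = (\<integral>\<^sup>+ z. indicator A (fst z) \<partial>\<sigma>)"
      using A fstb(1) by (intro nn_integral_distr) (auto simp: ms\<sigma>)
    also have "\<dots> = (\<integral>\<^sup>+ x. indicator A x \<partial>\<mu>)" using A by (intro marg1) simp
    also have "\<dots> = emeasure \<mu> A" using A P1D(2)[OF m(1)] by simp
    finally show "emeasure (distr \<sigma> borel fst) A = emeasure \<mu> A" .
  qed
  moreover have "distr \<sigma> borel snd = \<rho>"
  proof (rule measure_eqI)
    show "sets (distr \<sigma> borel snd) = sets \<rho>" using P1D(2)[OF m(3)] by simp
    fix A assume "A \<in> sets (distr \<sigma> borel snd)"
    then have A: "A \<in> sets borel" by simp
    have "emeasure (distr \<sigma> borel snd) A = (\<integral>\<^sup>+ x. indicator A x \<partial>distr \<sigma> borel snd)" using A by simp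
    also have "\<dots> = (\<integral>\<^sup>+ z. indicator A (snd z) \<partial>\<sigma>)"
      using A fstb(2) by (intro nn_integral_distr) (auto simp: ms\<sigma>)
    also have "\<dots> = (\<integral>\<^sup>+ x. indicator A x \<partial>\<rho>)" using A by (intro marg2) simp
    also have "\<dots> = emeasure \<rho> A" using A P1D(2)[OF m(3)] by simp
    finally show "emeasure (distr \<sigma> borel snd) A = emeasure \<rho> A" .
  qed
  moreover have "prob_space \<sigma>"
  proof (rule prob_spaceI)
    have "emeasure \<sigma> (space \<sigma>) = (\<integral>\<^sup>+ z. (\<lambda>_. 1) (fst z) \<partial>\<sigma>)"
      by (simp add: s\<sigma>)
    also have "\<dots> = (\<integral>\<^sup>+ x. 1 \<partial>\<mu>)" by (intro marg1) simp
    also have "\<dots> = 1" using prob_space.emeasure_space_1[OF P1D(1)[OF m(1)]] by simp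
    finally show "emeasure \<sigma> (space \<sigma>) = 1" .
  qed
  ultimately have cpl: "\<sigma> \<in> couplings \<mu> \<rho>" unfolding couplings_def using s\<sigma> by auto
  define \<beta> where "\<beta> = (\<lambda>(k::nat) (y::'a). if k = 0 then dist x0 y else e/4)"
  have \<beta>0: "0 \<le> \<beta> k y" for k y unfolding \<beta>_def using e by auto
  have \<beta>c: "continuous_on UNIV (\<beta> k)" for k unfolding \<beta>_def by (cases "k = 0") (auto intro!: continuous_intros)
  have \<beta>tri: "dist y y' \<le> \<beta> k y + \<beta> k y'" if "k \<le> M" "ch k y \<noteq> 0" "ch k y' \<noteq> 0" for k y y'
  proof (cases "k = 0")
    case True then show ?thesis unfolding \<beta>_def by (simp add: dist_triangle3)
  next
    case False
    then have "k \<in> {1..M}" using that by auto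
    then have "dist y (b k) < e/4" "dist y' (b k) < e/4" using ch(4) that by auto
    then show ?thesis unfolding \<beta>_def using False dist_triangle3[of y y' "b k"] by (simp add: dist_commute[of "b k"])
  qed
  define T where "T = (\<lambda>k w. (c k (snd (fst w)) * ennreal (dist (fst (fst w)) (snd (fst w)))) * c k (fst (snd w))
      + (c k (snd (fst w)) * ennreal (\<beta> k (snd (fst w)))) * c k (fst (snd w))
      + c k (snd (fst w)) * (c k (fst (snd w)) * ennreal (\<beta> k (fst (snd w))))
      + c k (snd (fst w)) * (c k (fst (snd w)) * ennreal (dist (fst (snd w)) (snd (snd w)))))"
  define P1 where "P1 = (\<lambda>k. \<integral>\<^sup>+ p. c k (snd p) * ennreal (dist (fst p) (snd p)) \<partial>\<pi>1)"
  define B where "B = (\<lambda>k. \<integral>\<^sup>+ y. c k y * ennreal (\<beta> k y) \<partial>\<nu>)"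
  define P3 where "P3 = (\<lambda>k. \<integral>\<^sup>+ q. c k (fst q) * ennreal (dist (fst q) (snd q)) \<partial>\<pi>2)"
  have mcb: "(\<lambda>y. c k y * ennreal (\<beta> k y)) \<in> borel_measurable borel" for k
    using mc[of k] cont_ennreal_meas[OF \<beta>c[of k]] by measurable
  have md1: "(\<lambda>p. ennreal (dist (fst p) (snd p))) \<in> borel_measurable \<pi>1"
    by (intro coupling_meas[OF c1] continuous_intros)
  have md2: "(\<lambda>p. ennreal (dist (fst p) (snd p))) \<in> borel_measurable \<pi>2"
    by (intro coupling_meas[OF c2] continuous_intros)
  have mck1: "(\<lambda>p. c k (snd p)) \<in> borel_measurable \<pi>1" for k
    using measurable_compose[OF fst1(2) mc] by simp
  have mck2: "(\<lambda>p. c k (fst p)) \<in> borel_measurable \<pi>2" for k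
    using measurable_compose[OF fst2(1) mc] by simp
  have B1: "B k = (\<integral>\<^sup>+ p. c k (snd p) * ennreal (\<beta> k (snd p)) \<partial>\<pi>1)" for k
    unfolding B_def using couplings_snd_integral[OF c1 mcb[of k]] by simp
  have B2: "B k = (\<integral>\<^sup>+ q. c k (fst q) * ennreal (\<beta> k (fst q)) \<partial>\<pi>2)" for k
    unfolding B_def using couplings_fst_integral[OF c2 mcb[of k]] by simp
  have intT: "(\<integral>\<^sup>+ w. T k w \<partial>PP) = P1 k * vk k + B k * vk k + vk k * B k + vk k * P3 k" for k
  proof -
    have a1: "(\<lambda>p. c k (snd p) * ennreal (dist (fst p) (snd p))) \<in> borel_measurable \<pi>1"
      using mck1 md1 by measurable
    have a2: "(\<lambda>p. c k (snd p) * ennreal (\<beta> k (snd p))) \<in> borel_measurable \<pi>1"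
      using measurable_compose[OF fst1(2) mcb[of k]] by simp
    have a3: "(\<lambda>q. c k (fst q) * ennreal (\<beta> k (fst q))) \<in> borel_measurable \<pi>2"
      using measurable_compose[OF fst2(1) mcb[of k]] by simp
    have a4: "(\<lambda>q. c k (fst q) * ennreal (dist (fst q) (snd q))) \<in> borel_measurable \<pi>2"
      using mck2 md2 by measurable
    have i1: "(\<integral>\<^sup>+ w. (c k (snd (fst w)) * ennreal (dist (fst (fst w)) (snd (fst w)))) * c k (fst (snd w)) \<partial>PP) = P1 k * vk k"
      unfolding PP_def P1_def vk2 using nn_integral_pair_sep[OF sfin1 a1 mck2[of k]] by simp
    have i2: "(\<integral>\<^sup>+ w. (c k (snd (fst w)) * ennreal (\<beta> k (snd (fst w)))) * c k (fst (snd w)) \<partial>PP) = B k * vk k"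
      unfolding PP_def B1 vk2 using nn_integral_pair_sep[OF sfin1 a2 mck2[of k]] by simp
    have i3: "(\<integral>\<^sup>+ w. c k (snd (fst w)) * (c k (fst (snd w)) * ennreal (\<beta> k (fst (snd w)))) \<partial>PP) = vk k * B k"
      unfolding PP_def B2 vk1 using nn_integral_pair_sep[OF sfin1 mck1[of k] a3] by simp
    have i4: "(\<integral>\<^sup>+ w. c k (snd (fst w)) * (c k (fst (snd w)) * ennreal (dist (fst (snd w)) (snd (snd w)))) \<partial>PP) = vk k * P3 k"
      unfolding PP_def P3_def vk1 using nn_integral_pair_sep[OF sfin1 mck1[of k] a4] by simp
    have b1: "(\<lambda>w. (c k (snd (fst w)) * ennreal (dist (fst (fst w)) (snd (fst w)))) * c k (fst (snd w))) \<in> borel_measurable PP"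
      unfolding PP_def using a1 mck2[of k] by measurable
    have b2: "(\<lambda>w. (c k (snd (fst w)) * ennreal (\<beta> k (snd (fst w)))) * c k (fst (snd w))) \<in> borel_measurable PP"
      unfolding PP_def using a2 mck2[of k] by measurable
    have b3: "(\<lambda>w. c k (snd (fst w)) * (c k (fst (snd w)) * ennreal (\<beta> k (fst (snd w))))) \<in> borel_measurable PP"
      unfolding PP_def using mck1[of k] a3 by measurable
    have b4: "(\<lambda>w. c k (snd (fst w)) * (c k (fst (snd w)) * ennreal (dist (fst (snd w)) (snd (snd w))))) \<in> borel_measurable PP"
      unfolding PP_def using mck1[of k] a4 by measurable
    show ?thesis unfolding T_def
      using b1 b2 b3 b4 by (simp add: nn_integral_add i1 i2 i3 i4)
  qed
  have mT: "T k \<in> borel_measurable PP" for k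
  proof -
    have "(\<lambda>p. c k (snd p) * ennreal (dist (fst p) (snd p))) \<in> borel_measurable \<pi>1"
      "(\<lambda>p. c k (snd p) * ennreal (\<beta> k (snd p))) \<in> borel_measurable \<pi>1"
      "(\<lambda>q. c k (fst q) * ennreal (\<beta> k (fst q))) \<in> borel_measurable \<pi>2"
      "(\<lambda>q. c k (fst q) * ennreal (dist (fst q) (snd q))) \<in> borel_measurable \<pi>2"
      using mck1 md1 mck2 md2 measurable_compose[OF fst1(2) mcb[of k]] measurable_compose[OF fst2(1) mcb[of k]]
      by (measurable, simp, simp, measurable)
    then show ?thesis unfolding T_def PP_def using mck1[of k] mck2[of k]
      by measurable
  qed
  have "cost \<sigma> = (\<integral>\<^sup>+ w. dens w * ennreal (dist (fst (G w)) (snd (G w))) \<partial>PP)"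
    unfolding cost_def by (intro int\<sigma> cont_ennreal_meas continuous_intros)
  also have "\<dots> \<le> (\<integral>\<^sup>+ w. (\<Sum>k\<le>M. (1 / vk k) * T k w) \<partial>PP)"
  proof (intro nn_integral_mono)
    fix w :: "('a\<times>'a)\<times>('a\<times>'a)"
    have "dens w * ennreal (dist (fst (G w)) (snd (G w))) = (\<Sum>k\<le>M. (1 / vk k) * (c k (snd (fst w)) * c k (fst (snd w)) * ennreal (dist (fst (fst w)) (snd (snd w)))))"
      unfolding dens_def G_def sum_distrib_right by (simp add: ac_simps)
    also have "\<dots> \<le> (\<Sum>k\<le>M. (1 / vk k) * T k w)"
    proof (intro sum_mono mult_left_mono)
      fix k assume "k \<in> {..M}"
      then have kM: "k \<le> M" by simp
      show "c k (snd (fst w)) * c k (fst (snd w)) * ennreal (dist (fst (fst w)) (snd (snd w))) \<le> T k w"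
        unfolding T_def c_def
      proof (rule ptw_ennreal)
        assume "ch k (snd (fst w)) \<noteq> 0" "ch k (fst (snd w)) \<noteq> 0"
        then have "dist (snd (fst w)) (fst (snd w)) \<le> \<beta> k (snd (fst w)) + \<beta> k (fst (snd w))"
          using \<beta>tri kM by auto
        then show "dist (fst (fst w)) (snd (snd w)) \<le> dist (fst (fst w)) (snd (fst w)) + \<beta> k (snd (fst w)) + \<beta> k (fst (snd w)) + dist (fst (snd w)) (snd (snd w))"
          using dist_triangle[of "fst (fst w)" "snd (snd w)" "snd (fst w)"] dist_triangle[of "snd (fst w)" "snd (snd w)" "fst (snd w)"]
          by linarith
      qed (auto simp: ch(1) \<beta>0)
    qed auto
    finally show "dens w * ennreal (dist (fst (G w)) (snd (G w))) \<le> (\<Sum>k\<le>M. (1 / vk k) * T k w)" .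
  qed
  also have "\<dots> = (\<Sum>k\<le>M. (1 / vk k) * (P1 k * vk k + B k * vk k + vk k * B k + vk k * P3 k))"
    using mT by (subst nn_integral_sum) (auto simp: nn_integral_cmult intT)
  also have "\<dots> \<le> (\<Sum>k\<le>M. P1 k + B k + B k + P3 k)"
    by (intro sum_mono) (simp add: distrib_left add_mono ennreal_w_le ennreal_w_le')
  also have "\<dots> = (\<Sum>k\<le>M. P1 k) + 2 * (\<Sum>k\<le>M. B k) + (\<Sum>k\<le>M. P3 k)"
    by (simp add: sum.distrib mult_2)
  also have "(\<Sum>k\<le>M. P1 k) = cost \<pi>1"
  proof -
    have "(\<Sum>k\<le>M. P1 k) = (\<integral>\<^sup>+ p. (\<Sum>k\<le>M. c k (snd p) * ennreal (dist (fst p) (snd p))) \<partial>\<pi>1)"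
      unfolding P1_def using mck1 md1 by (subst nn_integral_sum) auto
    also have "\<dots> = cost \<pi>1" unfolding cost_def by (simp add: sum_distrib_right[symmetric] csum)
    finally show ?thesis .
  qed
  also have "(\<Sum>k\<le>M. P3 k) = cost \<pi>2"
  proof -
    have "(\<Sum>k\<le>M. P3 k) = (\<integral>\<^sup>+ q. (\<Sum>k\<le>M. c k (fst q) * ennreal (dist (fst q) (snd q))) \<partial>\<pi>2)"
      unfolding P3_def using mck2 md2 by (subst nn_integral_sum) auto
    also have "\<dots> = cost \<pi>2" unfolding cost_def by (simp add: sum_distrib_right[symmetric] csum)
    finally show ?thesis .
  qed
  also have "(\<Sum>k\<le>M. B k) \<le> ennreal (e/4) + ennreal (e/4)"
  proof -
    have "(\<Sum>k\<le>M. B k) = (\<integral>\<^sup>+ y. (\<Sum>k\<le>M. c k y * ennreal (\<beta> k y)) \<partial>\<nu>)"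
      unfolding B_def using mcb by (subst nn_integral_sum) (auto simp: measurable_P1[OF m(2)])
    also have "\<dots> \<le> (\<integral>\<^sup>+ y. ennreal (e/4) + ennreal (dist x0 y) * indicator {x. R < dist x0 x} y \<partial>\<nu>)"
    proof (intro nn_integral_mono)
      fix y
      have "(\<Sum>k\<le>M. c k y * ennreal (\<beta> k y)) = ennreal (\<Sum>k\<le>M. ch k y * \<beta> k y)"
        unfolding c_def using ch(1) \<beta>0 by (simp add: ennreal_mult[symmetric] sum_ennreal mult_nonneg_nonneg)
      also have "\<dots> \<le> ennreal (e/4 + dist x0 y * indicator {x. R < dist x0 x} y)"
      proof (intro ennreal_leI)
        have "(\<Sum>k\<le>M. ch k y * \<beta> k y) = ch 0 y * dist x0 y + (\<Sum>k\<in>{1..M}. ch k y * (e/4))"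
        proof -
          have "(\<Sum>k\<le>M. ch k y * \<beta> k y) = ch 0 y * \<beta> 0 y + (\<Sum>k\<in>{Suc 0..M}. ch k y * \<beta> k y)"
            by (simp add: atMost_atLeast0 sum.atLeast_Suc_atMost)
          then show ?thesis unfolding \<beta>_def by (auto intro!: sum.cong)
        qed
        also have "(\<Sum>k\<in>{1..M}. ch k y * (e/4)) \<le> e/4"
        proof -
          have "(\<Sum>k\<in>{1..M}. ch k y) \<le> (\<Sum>k\<le>M. ch k y)"
            using ch(1) by (intro sum_mono2) auto
          then have "(\<Sum>k\<in>{1..M}. ch k y) \<le> 1" using ch(2) by simp
          then have "(\<Sum>k\<in>{1..M}. ch k y) * (e/4) \<le> 1 * (e/4)" using e by (intro mult_right_mono) auto
          moreover have "(\<Sum>k\<in>{1..M}. ch k y * (e/4)) = (\<Sum>k\<in>{1..M}. ch k y) * (e/4)"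
            by (rule sum_distrib_right[symmetric])
          ultimately show ?thesis by linarith
        qed
        also have "ch 0 y * dist x0 y \<le> dist x0 y * indicator {x. R < dist x0 x} y"
        proof (cases "ch 0 y = 0")
          case False
          then have "R < dist x0 y" using ch(6) by auto
          then show ?thesis using PU_le1[OF pu, of 0 y] ch(1)[of 0 y] mult_right_mono[of "ch 0 y" 1 "dist x0 y"] by simp
        qed simp
        finally show "(\<Sum>k\<le>M. ch k y * \<beta> k y) \<le> e/4 + dist x0 y * indicator {x. R < dist x0 x} y" by simp
      qed
      also have "\<dots> = ennreal (e/4) + ennreal (dist x0 y) * indicator {x. R < dist x0 x} y"
        using e by (simp add: ennreal_plus split: split_indicator)
      finally show "(\<Sum>k\<le>M. c k y * ennreal (\<beta> k y)) \<le> ennreal (e/4) + ennreal (dist x0 y) * indicator {x. R < dist x0 x} y" .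
    qed
    also have "\<dots> = ennreal (e/4) + (\<integral>\<^sup>+ y. ennreal (dist x0 y) * indicator {x. R < dist x0 x} y \<partial>\<nu>)"
    proof -
      have "{x. R < dist x0 x} \<in> sets borel"
        by (intro borel_open open_Collect_less continuous_intros)
      then show ?thesis using prob_space.emeasure_space_1[OF P1D(1)[OF m(2)]] dist_ennreal_meas[of x0]
        by (subst nn_integral_add) (auto simp: measurable_P1[OF m(2)])
    qed
    also have "\<dots> \<le> ennreal (e/4) + ennreal (e/4)" using R(2) by (intro add_left_mono) simp
    finally show ?thesis .
  qed
  finally have "cost \<sigma> \<le> cost \<pi>1 + 2 * (ennreal (e/4) + ennreal (e/4)) + cost \<pi>2"
    by (simp add: add_mono mult_left_mono)
  also have "2 * (ennreal (e/4) + ennreal (e/4)) = ennreal e"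
  proof -
    have "2 * (ennreal (e/4) + ennreal (e/4)) = ennreal (e/4) + ennreal (e/4) + (ennreal (e/4) + ennreal (e/4))"
      by (simp add: mult_2)
    also have "\<dots> = ennreal e"
    proof -
      have h1: "ennreal (e/4) + ennreal (e/4) = ennreal (e/2)"
      proof -
        have "ennreal (e/4 + e/4) = ennreal (e/4) + ennreal (e/4)" using e by (intro ennreal_plus) auto
        moreover have "e/4 + e/4 = e/2" by simp
        ultimately show ?thesis by metis
      qed
      have h2: "ennreal (e/2) + ennreal (e/2) = ennreal e"
      proof -
        have "ennreal (e/2 + e/2) = ennreal (e/2) + ennreal (e/2)" using e by (intro ennreal_plus) auto
        moreover have "e/2 + e/2 = e" by simp
        ultimately show ?thesis by metis
      qed
      show ?thesis unfolding h1 h2 ..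
    qed
    finally show ?thesis .
  qed
  finally show ?thesis using cpl by (intro bexI[of _ \<sigma>]) (auto simp: ac_simps)
qed

lemma W1_triangle:
  fixes \<mu> \<nu> \<rho> :: "'a::metric_space measure"
  assumes P: "proper_space TYPE('a)" and m: "\<mu> \<in> P1" "\<nu> \<in> P1" "\<rho> \<in> P1"
  shows "W1 \<mu> \<rho> \<le> W1 \<mu> \<nu> + W1 \<nu> \<rho>"
proof (rule field_le_epsilon)
  fix e :: real assume e: "e > 0"
  obtain \<pi>1 where p1: "\<pi>1 \<in> couplings \<mu> \<nu>" "cost \<pi>1 < ennreal (W1 \<mu> \<nu> + e/3)"
    using W1_approx[OF P m(1,2), of "e/3"] e by auto
  obtain \<pi>2 where p2: "\<pi>2 \<in> couplings \<nu> \<rho>" "cost \<pi>2 < ennreal (W1 \<nu> \<rho> + e/3)"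
    using W1_approx[OF P m(2,3), of "e/3"] e by auto
  obtain \<sigma> where s: "\<sigma> \<in> couplings \<mu> \<rho>" "cost \<sigma> \<le> cost \<pi>1 + cost \<pi>2 + ennreal (e/3)"
    using glue[OF P m p1(1) p2(1), of "e/3"] e by auto
  have "ennreal (W1 \<mu> \<rho>) \<le> cost \<sigma>" using W1_le_cost[OF P m(1,3) s(1)] .
  also have "\<dots> \<le> ennreal (W1 \<mu> \<nu> + e/3) + ennreal (W1 \<nu> \<rho> + e/3) + ennreal (e/3)"
    using s(2) p1(2) p2(2) by (meson add_mono order.strict_implies_order order_refl order_trans)
  also have "\<dots> = ennreal (W1 \<mu> \<nu> + W1 \<nu> \<rho> + e)"
    using e W1_nonneg[of \<mu> \<nu>] W1_nonneg[of \<nu> \<rho>] by (simp add: ennreal_plus[symmetric] del: ennreal_plus)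
  finally show "W1 \<mu> \<rho> \<le> W1 \<mu> \<nu> + W1 \<nu> \<rho> + e"
    using e W1_nonneg[of \<mu> \<nu>] W1_nonneg[of \<nu> \<rho>] by (subst (asm) ennreal_le_iff) auto
qed

lemma discrete_adjust:
  fixes \<gamma> cm :: "nat \<Rightarrow> nat \<Rightarrow> real" and q p pn :: "nat \<Rightarrow> real" and MJ MI :: nat and C :: real
  assumes g0: "\<And>j i. 0 \<le> \<gamma> j i" and p0: "\<And>i. 0 \<le> p i" and pn0: "\<And>i. 0 \<le> pn i"
    and row: "\<And>j. j \<le> MJ \<Longrightarrow> (\<Sum>i\<le>MI. \<gamma> j i) = q j"
    and col: "\<And>i. i \<le> MI \<Longrightarrow> (\<Sum>j\<le>MJ. \<gamma> j i) = pn i"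
    and q1: "(\<Sum>j\<le>MJ. q j) = 1" and p1: "(\<Sum>i\<le>MI. p i) = 1"
    and cm0: "\<And>j i. 0 \<le> cm j i" and cmC: "\<And>j i. cm j i \<le> C"
  shows "\<exists>\<gamma>'. (\<forall>j i. 0 \<le> \<gamma>' j i) \<and> (\<forall>j\<le>MJ. (\<Sum>i\<le>MI. \<gamma>' j i) = q j) \<and> (\<forall>i\<le>MI. (\<Sum>j\<le>MJ. \<gamma>' j i) = p i)
     \<and> (\<Sum>j\<le>MJ. \<Sum>i\<le>MI. \<gamma>' j i * cm j i) \<le> (\<Sum>j\<le>MJ. \<Sum>i\<le>MI. \<gamma> j i * cm j i) + C * (\<Sum>i\<le>MI. \<bar>p i - pn i\<bar>)"
proof -
  define t where "t = (\<lambda>i. if pn i = 0 then 0 else min 1 (p i / pn i))"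
  have t0: "0 \<le> t i" "t i \<le> 1" for i unfolding t_def using p0[of i] pn0[of i] by auto
  define g where "g = (\<lambda>j i. \<gamma> j i * t i)"
  have g0: "0 \<le> g j i" "g j i \<le> \<gamma> j i" for j i
    unfolding g_def using g0[of j i] t0[of i] by (auto simp: mult_left_le)
  have gcol: "(\<Sum>j\<le>MJ. g j i) = min (pn i) (p i)" if "i \<le> MI" for i
  proof -
    have "(\<Sum>j\<le>MJ. g j i) = pn i * t i" unfolding g_def using col[OF that] by (simp add: sum_distrib_right[symmetric])
    also have "\<dots> = min (pn i) (p i)"
      using p0[of i] pn0[of i] unfolding t_def by (auto simp: min_def field_simps)
    finally show ?thesis .
  qed
  define r where "r = (\<lambda>j. q j - (\<Sum>i\<le>MI. g j i))"
  define s where "s = (\<lambda>i. p i - (\<Sum>j\<le>MJ. g j i))"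
  have r0: "0 \<le> r j" if "j \<le> MJ" for j
  proof -
    have "(\<Sum>i\<le>MI. g j i) \<le> (\<Sum>i\<le>MI. \<gamma> j i)" using g0 by (intro sum_mono) auto
    then show ?thesis unfolding r_def using row[OF that] by simp
  qed
  have s0: "0 \<le> s i" "s i \<le> \<bar>p i - pn i\<bar>" if "i \<le> MI" for i
    unfolding s_def using gcol[OF that] by auto
  define \<delta> where "\<delta> = (\<Sum>i\<le>MI. s i)"
  have sumr: "(\<Sum>j\<le>MJ. r j) = \<delta>"
  proof -
    have "(\<Sum>j\<le>MJ. r j) = 1 - (\<Sum>j\<le>MJ. \<Sum>i\<le>MI. g j i)" unfolding r_def using q1 by (simp add: sum_subtractf)
    also have "\<dots> = 1 - (\<Sum>i\<le>MI. \<Sum>j\<le>MJ. g j i)" by (subst sum.swap) simp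
    also have "\<dots> = \<delta>" unfolding \<delta>_def s_def using p1 by (simp add: sum_subtractf)
    finally show ?thesis .
  qed
  have \<delta>0: "0 \<le> \<delta>" unfolding \<delta>_def using s0 by (auto intro!: sum_nonneg)
  define \<gamma>' where "\<gamma>' = (\<lambda>j i. if j \<le> MJ \<and> i \<le> MI then g j i + (if \<delta> = 0 then 0 else r j * s i / \<delta>) else 0)"
  have A: "\<forall>j i. 0 \<le> \<gamma>' j i"
    unfolding \<gamma>'_def using g0 r0 s0 \<delta>0 by (auto intro!: add_nonneg_nonneg divide_nonneg_nonneg mult_nonneg_nonneg)
  have B: "\<forall>j\<le>MJ. (\<Sum>i\<le>MI. \<gamma>' j i) = q j"
  proof (intro allI impI)
    fix j assume j: "j \<le> MJ"
    show "(\<Sum>i\<le>MI. \<gamma>' j i) = q j"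
    proof (cases "\<delta> = 0")
      case True
      then have "r j = 0" using sumr r0 j by (metis (no_types, lifting) atMost_iff finite_atMost sum_nonneg_eq_0_iff)
      then show ?thesis unfolding \<gamma>'_def using True j by (simp add: r_def)
    next
      case False
      have "(\<Sum>i\<le>MI. \<gamma>' j i) = (\<Sum>i\<le>MI. g j i) + r j * (\<Sum>i\<le>MI. s i) / \<delta>"
        unfolding \<gamma>'_def using False j by (simp add: sum.distrib sum_divide_distrib[symmetric] sum_distrib_left)
      also have "\<dots> = q j" using False unfolding \<delta>_def[symmetric] r_def by simp
      finally show ?thesis .
    qed
  qed
  have C: "\<forall>i\<le>MI. (\<Sum>j\<le>MJ. \<gamma>' j i) = p i"
  proof (intro allI impI)
    fix i assume i: "i \<le> MI"
    show "(\<Sum>j\<le>MJ. \<gamma>' j i) = p i"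
    proof (cases "\<delta> = 0")
      case True
      then have "s i = 0" using s0 i unfolding \<delta>_def
        by (metis (no_types, lifting) atMost_iff finite_atMost sum_nonneg_eq_0_iff)
      then show ?thesis unfolding \<gamma>'_def using True i by (simp add: s_def)
    next
      case False
      have "(\<Sum>j\<le>MJ. \<gamma>' j i) = (\<Sum>j\<le>MJ. g j i) + (\<Sum>j\<le>MJ. r j) * s i / \<delta>"
        unfolding \<gamma>'_def using False i by (simp add: sum.distrib sum_divide_distrib[symmetric] sum_distrib_right)
      also have "\<dots> = p i" using False unfolding sumr s_def by simp
      finally show ?thesis .
    qed
  qed
  have D: "(\<Sum>j\<le>MJ. \<Sum>i\<le>MI. \<gamma>' j i * cm j i) \<le> (\<Sum>j\<le>MJ. \<Sum>i\<le>MI. \<gamma> j i * cm j i) + C * (\<Sum>i\<le>MI. \<bar>p i - pn i\<bar>)"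
  proof -
    define h where "h = (\<lambda>j i. if \<delta> = 0 then 0 else r j * s i / \<delta>)"
    have h0: "0 \<le> h j i" if "j \<le> MJ" "i \<le> MI" for j i
      unfolding h_def using r0 s0 \<delta>0 that by auto
    have sumh: "(\<Sum>j\<le>MJ. \<Sum>i\<le>MI. h j i) \<le> (\<Sum>i\<le>MI. \<bar>p i - pn i\<bar>)"
    proof (cases "\<delta> = 0")
      case True then show ?thesis unfolding h_def by (auto intro!: sum_nonneg)
    next
      case False
      have "(\<Sum>j\<le>MJ. \<Sum>i\<le>MI. h j i) = (\<Sum>j\<le>MJ. r j) * (\<Sum>i\<le>MI. s i) / \<delta>"
        unfolding h_def using False by (simp add: sum_divide_distrib[symmetric] sum_product)
      also have "\<dots> = \<delta>" using False unfolding sumr \<delta>_def[symmetric] by simp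
      also have "\<dots> \<le> (\<Sum>i\<le>MI. \<bar>p i - pn i\<bar>)" unfolding \<delta>_def using s0 by (intro sum_mono) auto
      finally show ?thesis .
    qed
    have "(\<Sum>j\<le>MJ. \<Sum>i\<le>MI. \<gamma>' j i * cm j i) = (\<Sum>j\<le>MJ. \<Sum>i\<le>MI. g j i * cm j i + h j i * cm j i)"
      unfolding \<gamma>'_def h_def by (intro sum.cong refl) (auto simp: algebra_simps)
    also have "\<dots> \<le> (\<Sum>j\<le>MJ. \<Sum>i\<le>MI. \<gamma> j i * cm j i + C * h j i)"
    proof (intro sum_mono add_mono)
      fix j i assume "j \<in> {..MJ}" "i \<in> {..MI}"
      show "g j i * cm j i \<le> \<gamma> j i * cm j i" using g0 cm0 by (intro mult_right_mono) auto
      show "h j i * cm j i \<le> C * h j i"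
        using h0[of j i] \<open>j \<in> {..MJ}\<close> \<open>i \<in> {..MI}\<close> cmC[of j i] mult_right_mono[of "cm j i" C "h j i"] by (simp add: mult.commute)
    qed
    also have "\<dots> = (\<Sum>j\<le>MJ. \<Sum>i\<le>MI. \<gamma> j i * cm j i) + C * (\<Sum>j\<le>MJ. \<Sum>i\<le>MI. h j i)"
      by (simp add: sum.distrib sum_distrib_left)
    also have "\<dots> \<le> (\<Sum>j\<le>MJ. \<Sum>i\<le>MI. \<gamma> j i * cm j i) + C * (\<Sum>i\<le>MI. \<bar>p i - pn i\<bar>)"
    proof -
      have "0 \<le> C" using cm0[of 0 0] cmC[of 0 0] by simp
      then show ?thesis using sumh by (simp add: mult_left_mono)
    qed
    finally show ?thesis .
  qed
  show ?thesis using A B C D by blast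
qed

definition cmat :: "(nat \<Rightarrow> 'a::metric_space) \<Rightarrow> (nat \<Rightarrow> 'a) \<Rightarrow> nat \<Rightarrow> nat \<Rightarrow> real" where
  "cmat b a j i = (if 0 < j \<and> 0 < i then dist (b j) (a i) else 0)"

lemma P1_meas_comp:
  assumes "\<mu> \<in> P1" "f \<in> borel_measurable borel" shows "f \<in> borel_measurable \<mu>"
  using assms by (simp add: measurable_P1)

lemma sum_le_one_nonneg:
  fixes g :: "nat \<Rightarrow> real"
  assumes "\<And>i. i \<le> n \<Longrightarrow> 0 \<le> g i" "(\<Sum>i\<le>n. g i) = s" "i \<le> n"
  shows "g i \<le> s"
  using assms member_le_sum[of i "{..n}" g] by auto

lemma ptw2_ennreal:
  fixes a b D K A1 A2 :: real
  assumes "0 \<le> a" "0 \<le> b" "0 \<le> D" "0 \<le> K" "0 \<le> A1" "0 \<le> A2"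
    "a \<noteq> 0 \<Longrightarrow> b \<noteq> 0 \<Longrightarrow> D \<le> K + A1 + A2"
  shows "ennreal a * ennreal b * ennreal D \<le> ennreal a * (ennreal b * ennreal K) + ennreal a * ennreal A1 * ennreal b
     + ennreal a * (ennreal b * ennreal A2)"
proof (cases "a = 0 \<or> b = 0")
  case True then show ?thesis by auto
next
  case False
  then have "a * b * D \<le> a * (b * K) + a * A1 * b + a * (b * A2)"
  proof -
    have "a * b * D \<le> a * b * (K + A1 + A2)"
      using assms False by (intro mult_left_mono) auto
    also have "\<dots> = a * (b * K) + a * A1 * b + a * (b * A2)" by (simp add: algebra_simps)
    finally show ?thesis .
  qed
  then have "ennreal (a * b * D) \<le> ennreal (a * (b * K) + a * A1 * b + a * (b * A2))"
    by (rule ennreal_leI)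
  moreover have "ennreal (a * b * D) = ennreal a * ennreal b * ennreal D"
    using assms by (simp add: ennreal_mult)
  moreover have "ennreal (a * (b * K) + a * A1 * b + a * (b * A2)) =
     ennreal a * (ennreal b * ennreal K) + ennreal a * ennreal A1 * ennreal b + ennreal a * (ennreal b * ennreal A2)"
    using assms by (simp add: ennreal_mult ennreal_plus)
  ultimately show ?thesis by simp
qed

lemma plan_coupling:
  fixes \<nu> \<mu> :: "'a::metric_space measure" and \<gamma> :: "nat \<Rightarrow> nat \<Rightarrow> real" and q p :: "nat \<Rightarrow> real"
  assumes P: "proper_space TYPE('a)" and m: "\<nu> \<in> P1" "\<mu> \<in> P1"
    and pu1: "PU x0 R \<epsilon> MJ b ch" and pu2: "PU x0 R \<epsilon> MI a \<phi>" and \<epsilon>: "\<epsilon> > 0"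
    and g0: "\<And>j i. 0 \<le> \<gamma> j i"
    and row: "\<And>j. j \<le> MJ \<Longrightarrow> (\<Sum>i\<le>MI. \<gamma> j i) = q j"
    and col: "\<And>i. i \<le> MI \<Longrightarrow> (\<Sum>j\<le>MJ. \<gamma> j i) = p i"
    and qdef: "\<And>j. j \<le> MJ \<Longrightarrow> ennreal (q j) = (\<integral>\<^sup>+ x. ennreal (ch j x) \<partial>\<nu>)"
    and pdef: "\<And>i. i \<le> MI \<Longrightarrow> ennreal (p i) = (\<integral>\<^sup>+ y. ennreal (\<phi> i y) \<partial>\<mu>)"
  shows "\<exists>\<pi> \<in> couplings \<nu> \<mu>. cost \<pi> \<le> ennreal ((\<Sum>j\<le>MJ. \<Sum>i\<le>MI. \<gamma> j i * cmat b a j i) + 2 * \<epsilon>)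
     + 2 * (\<integral>\<^sup>+ x. ennreal (dist x0 x) * indicator {x. R < dist x0 x} x \<partial>\<nu>)
     + 2 * (\<integral>\<^sup>+ x. ennreal (dist x0 x) * indicator {x. R < dist x0 x} x \<partial>\<mu>)"
proof -
  note X = PU_D[OF pu1]
  note Y = PU_D[OF pu2]
  interpret n: prob_space \<nu> using P1D(1)[OF m(1)] .
  interpret u: prob_space \<mu> using P1D(1)[OF m(2)] .
  interpret pp: pair_prob_space \<nu> \<mu> ..
  have sfin: "sigma_finite_measure \<nu>" "sigma_finite_measure \<mu>" by unfold_locales
  have q0: "0 \<le> q j" if "j \<le> MJ" for j using row[OF that] g0 by (metis sum_nonneg)
  have p0: "0 \<le> p i" if "i \<le> MI" for i using col[OF that] g0 by (metis sum_nonneg)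
  have gq: "\<gamma> j i \<le> q j" if "j \<le> MJ" "i \<le> MI" for j i
    using sum_le_one_nonneg[of MI "\<gamma> j" "q j" i] row[OF that(1)] g0 that by auto
  have gp: "\<gamma> j i \<le> p i" if "j \<le> MJ" "i \<le> MI" for j i
    using sum_le_one_nonneg[of MJ "\<lambda>j. \<gamma> j i" "p i" j] col[OF that(2)] g0 that by auto
  define G where "G = (\<lambda>j i. \<gamma> j i / (q j * p i))"
  have G0: "0 \<le> G j i" if "j \<le> MJ" "i \<le> MI" for j i
    unfolding G_def using g0 q0 p0 that by auto
  have Gqp: "G j i * (q j * p i) = \<gamma> j i" if "j \<le> MJ" "i \<le> MI" for j i
  proof (cases "q j = 0 \<or> p i = 0")
    case True
    then have "\<gamma> j i = 0" using gq[OF that] gp[OF that] g0[of j i] by auto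
    then show ?thesis unfolding G_def by simp
  qed (auto simp: G_def)
  have Gp: "(\<Sum>i\<le>MI. G j i * p i) = (if q j = 0 then 0 else 1)" if "j \<le> MJ" for j
  proof -
    have "G j i * p i = \<gamma> j i / q j" if "i \<le> MI" for i
    proof (cases "p i = 0")
      case True
      then have "\<gamma> j i = 0" using gp[OF \<open>j \<le> MJ\<close> that] g0[of j i] by auto
      then show ?thesis using True by simp
    qed (auto simp: G_def)
    then have "(\<Sum>i\<le>MI. G j i * p i) = (\<Sum>i\<le>MI. \<gamma> j i) / q j" by (simp add: sum_divide_distrib)
    then show ?thesis using row[OF that] by auto
  qed
  have Gq: "(\<Sum>j\<le>MJ. G j i * q j) = (if p i = 0 then 0 else 1)" if "i \<le> MI" for i
  proof -
    have "G j i * q j = \<gamma> j i / p i" if "j \<le> MJ" for j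
    proof (cases "q j = 0")
      case True
      then have "\<gamma> j i = 0" using gq[OF that \<open>i \<le> MI\<close>] g0[of j i] by auto
      then show ?thesis using True by simp
    qed (auto simp: G_def)
    then have "(\<Sum>j\<le>MJ. G j i * q j) = (\<Sum>j\<le>MJ. \<gamma> j i) / p i" by (simp add: sum_divide_distrib)
    then show ?thesis using col[OF that] by auto
  qed
  define cx where "cx = (\<lambda>j x. ennreal (ch j x))"
  define cy where "cy = (\<lambda>i y. ennreal (\<phi> i y))"
  have mcx: "cx j \<in> borel_measurable borel" for j unfolding cx_def by (intro cont_ennreal_meas X(3))
  have mcy: "cy i \<in> borel_measurable borel" for i unfolding cy_def by (intro cont_ennreal_meas Y(3))
  define dens where "dens = (\<lambda>z::'a\<times>'a. \<Sum>j\<le>MJ. \<Sum>i\<le>MI. ennreal (G j i) * (cx j (fst z) * cy i (snd z)))"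
  have mfst: "(\<lambda>z. f (fst z)) \<in> borel_measurable (\<nu> \<Otimes>\<^sub>M \<mu>)" if "f \<in> borel_measurable borel" for f :: "'a \<Rightarrow> ennreal"
    using P1_meas_comp[OF m(1) that] by measurable
  have msnd: "(\<lambda>z. f (snd z)) \<in> borel_measurable (\<nu> \<Otimes>\<^sub>M \<mu>)" if "f \<in> borel_measurable borel" for f :: "'a \<Rightarrow> ennreal"
    using P1_meas_comp[OF m(2) that] by measurable
  have mdens: "dens \<in> borel_measurable (\<nu> \<Otimes>\<^sub>M \<mu>)"
    unfolding dens_def
    by (intro borel_measurable_sum borel_measurable_times_ennreal borel_measurable_const mfst msnd mcx mcy)
  define \<pi> where "\<pi> = density (\<nu> \<Otimes>\<^sub>M \<mu>) dens"
  have s\<pi>: "sets \<pi> = sets borel"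
  proof -
    have "sets \<pi> = sets (\<nu> \<Otimes>\<^sub>M \<mu>)" unfolding \<pi>_def by (rule sets_density)
    also have "\<dots> = sets (borel \<Otimes>\<^sub>M borel)" by (rule sets_pair_measure_cong[OF P1D(2)[OF m(1)] P1D(2)[OF m(2)]])
    also have "\<dots> = sets borel" by (rule proper_sets_prod[OF P])
    finally show ?thesis .
  qed
  have int\<pi>: "(\<integral>\<^sup>+ z. H z \<partial>\<pi>) = (\<integral>\<^sup>+ z. dens z * H z \<partial>(\<nu> \<Otimes>\<^sub>M \<mu>))" if "H \<in> borel_measurable (\<nu> \<Otimes>\<^sub>M \<mu>)" for H
    unfolding \<pi>_def using mdens that by (rule nn_integral_density)
  have sumx: "(\<Sum>j\<le>MJ. cx j x) = 1" for x unfolding cx_def using X(1,2) by (subst sum_ennreal) auto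
  have sumy: "(\<Sum>i\<le>MI. cy i y) = 1" for y unfolding cy_def using Y(1,2) by (subst sum_ennreal) auto
  have qz: "(\<integral>\<^sup>+ x. f x * cx j x \<partial>\<nu>) = 0" if "q j = 0" "f \<in> borel_measurable borel" "j \<le> MJ" for f j
  proof -
    have "(\<integral>\<^sup>+ x. cx j x \<partial>\<nu>) = 0" using qdef[OF that(3)] that(1) unfolding cx_def by simp
    then have "AE x in \<nu>. cx j x = 0" using P1_meas_comp[OF m(1) mcx[of j]] by (simp add: nn_integral_0_iff_AE)
    then have "AE x in \<nu>. f x * cx j x = 0" by eventually_elim simp
    moreover have "(\<lambda>x. f x * cx j x) \<in> borel_measurable \<nu>"
      using P1_meas_comp[OF m(1) mcx[of j]] P1_meas_comp[OF m(1) that(2)] by measurable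
    ultimately show ?thesis using nn_integral_0_iff_AE by blast
  qed
  have pz: "(\<integral>\<^sup>+ y. cy i y * f y \<partial>\<mu>) = 0" if "p i = 0" "f \<in> borel_measurable borel" "i \<le> MI" for f i
  proof -
    have "(\<integral>\<^sup>+ y. cy i y \<partial>\<mu>) = 0" using pdef[OF that(3)] that(1) unfolding cy_def by simp
    then have "AE y in \<mu>. cy i y = 0" using P1_meas_comp[OF m(2) mcy[of i]] by (simp add: nn_integral_0_iff_AE)
    then have "AE y in \<mu>. cy i y * f y = 0" by eventually_elim simp
    moreover have "(\<lambda>y. cy i y * f y) \<in> borel_measurable \<mu>"
      using P1_meas_comp[OF m(2) mcy[of i]] P1_meas_comp[OF m(2) that(2)] by measurable
    ultimately show ?thesis using nn_integral_0_iff_AE by blast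
  qed
  have margx: "(\<integral>\<^sup>+ z. f (fst z) \<partial>\<pi>) = (\<integral>\<^sup>+ x. f x \<partial>\<nu>)" if mf: "f \<in> borel_measurable borel" for f
  proof -
    have m1: "(\<lambda>x. f x * cx j x) \<in> borel_measurable \<nu>" for j
      using P1_meas_comp[OF m(1) mcx[of j]] P1_meas_comp[OF m(1) mf] by measurable
    have m2: "cy i \<in> borel_measurable \<mu>" for i using P1_meas_comp[OF m(2) mcy[of i]] .
    have mm: "(\<lambda>z. (f (fst z) * cx j (fst z)) * cy i (snd z)) \<in> borel_measurable (\<nu> \<Otimes>\<^sub>M \<mu>)" for j i
      using m1[of j] m2[of i] by measurable
    have "(\<integral>\<^sup>+ z. f (fst z) \<partial>\<pi>) = (\<integral>\<^sup>+ z. dens z * f (fst z) \<partial>(\<nu> \<Otimes>\<^sub>M \<mu>))"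
      by (intro int\<pi> mfst mf)
    also have "\<dots> = (\<integral>\<^sup>+ z. (\<Sum>j\<le>MJ. \<Sum>i\<le>MI. ennreal (G j i) * ((f (fst z) * cx j (fst z)) * cy i (snd z))) \<partial>(\<nu> \<Otimes>\<^sub>M \<mu>))"
      unfolding dens_def sum_distrib_right by (intro nn_integral_cong sum.cong refl) (simp add: ac_simps)
    also have "\<dots> = (\<Sum>j\<le>MJ. \<Sum>i\<le>MI. ennreal (G j i) * (\<integral>\<^sup>+ z. (f (fst z) * cx j (fst z)) * cy i (snd z) \<partial>(\<nu> \<Otimes>\<^sub>M \<mu>)))"
      using mm by (simp add: nn_integral_sum nn_integral_cmult borel_measurable_sum)
    also have "\<dots> = (\<Sum>j\<le>MJ. \<Sum>i\<le>MI. ennreal (G j i) * ((\<integral>\<^sup>+ x. f x * cx j x \<partial>\<nu>) * ennreal (p i)))"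
    proof -
      have sep: "(\<integral>\<^sup>+ z. (f (fst z) * cx j (fst z)) * cy i (snd z) \<partial>(\<nu> \<Otimes>\<^sub>M \<mu>)) = (\<integral>\<^sup>+ x. f x * cx j x \<partial>\<nu>) * ennreal (p i)" if "i \<le> MI" for j i
        using nn_integral_pair_sep[OF sfin m1 m2, of j i] pdef[OF that] unfolding cy_def by simp
      show ?thesis by (intro sum.cong refl) (simp add: sep)
    qed
    also have "\<dots> = (\<Sum>j\<le>MJ. (\<integral>\<^sup>+ x. f x * cx j x \<partial>\<nu>) * ennreal (\<Sum>i\<le>MI. G j i * p i))"
    proof (intro sum.cong refl)
      fix j assume "j \<in> {..MJ}"
      then have j: "j \<le> MJ" by simp
      have "(\<Sum>i\<le>MI. ennreal (G j i) * ((\<integral>\<^sup>+ x. f x * cx j x \<partial>\<nu>) * ennreal (p i)))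
          = (\<Sum>i\<le>MI. (\<integral>\<^sup>+ x. f x * cx j x \<partial>\<nu>) * ennreal (G j i * p i))"
        using G0[OF j] p0 by (intro sum.cong refl) (simp add: ennreal_mult ac_simps)
      also have "\<dots> = (\<integral>\<^sup>+ x. f x * cx j x \<partial>\<nu>) * ennreal (\<Sum>i\<le>MI. G j i * p i)"
      proof -
        have "(\<Sum>i\<le>MI. ennreal (G j i * p i)) = ennreal (\<Sum>i\<le>MI. G j i * p i)"
          using G0[OF j] p0 by (intro sum_ennreal) auto
        then show ?thesis by (simp add: sum_distrib_left[symmetric])
      qed
      finally show "(\<Sum>i\<le>MI. ennreal (G j i) * ((\<integral>\<^sup>+ x. f x * cx j x \<partial>\<nu>) * ennreal (p i)))
          = (\<integral>\<^sup>+ x. f x * cx j x \<partial>\<nu>) * ennreal (\<Sum>i\<le>MI. G j i * p i)" .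
    qed
    also have "\<dots> = (\<Sum>j\<le>MJ. (\<integral>\<^sup>+ x. f x * cx j x \<partial>\<nu>))"
      using Gp qz[OF _ mf] by (intro sum.cong refl) auto
    also have "\<dots> = (\<integral>\<^sup>+ x. (\<Sum>j\<le>MJ. f x * cx j x) \<partial>\<nu>)"
      using m1 by (subst nn_integral_sum) auto
    also have "\<dots> = (\<integral>\<^sup>+ x. f x \<partial>\<nu>)" by (simp add: sum_distrib_left[symmetric] sumx)
    finally show ?thesis .
  qed
  have margy: "(\<integral>\<^sup>+ z. f (snd z) \<partial>\<pi>) = (\<integral>\<^sup>+ y. f y \<partial>\<mu>)" if mf: "f \<in> borel_measurable borel" for f
  proof -
    have m1: "cx j \<in> borel_measurable \<nu>" for j using P1_meas_comp[OF m(1) mcx[of j]] .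
    have m2: "(\<lambda>y. cy i y * f y) \<in> borel_measurable \<mu>" for i
      using P1_meas_comp[OF m(2) mcy[of i]] P1_meas_comp[OF m(2) mf] by measurable
    have mm: "(\<lambda>z. cx j (fst z) * (cy i (snd z) * f (snd z))) \<in> borel_measurable (\<nu> \<Otimes>\<^sub>M \<mu>)" for j i
      using m1[of j] m2[of i] by measurable
    have "(\<integral>\<^sup>+ z. f (snd z) \<partial>\<pi>) = (\<integral>\<^sup>+ z. dens z * f (snd z) \<partial>(\<nu> \<Otimes>\<^sub>M \<mu>))"
      by (intro int\<pi> msnd mf)
    also have "\<dots> = (\<integral>\<^sup>+ z. (\<Sum>j\<le>MJ. \<Sum>i\<le>MI. ennreal (G j i) * (cx j (fst z) * (cy i (snd z) * f (snd z)))) \<partial>(\<nu> \<Otimes>\<^sub>M \<mu>))"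
      unfolding dens_def sum_distrib_right by (intro nn_integral_cong sum.cong refl) (simp add: ac_simps)
    also have "\<dots> = (\<Sum>j\<le>MJ. \<Sum>i\<le>MI. ennreal (G j i) * (\<integral>\<^sup>+ z. cx j (fst z) * (cy i (snd z) * f (snd z)) \<partial>(\<nu> \<Otimes>\<^sub>M \<mu>)))"
      using mm by (simp add: nn_integral_sum nn_integral_cmult borel_measurable_sum)
    also have "\<dots> = (\<Sum>j\<le>MJ. \<Sum>i\<le>MI. ennreal (G j i) * (ennreal (q j) * (\<integral>\<^sup>+ y. cy i y * f y \<partial>\<mu>)))"
    proof -
      have sep: "(\<integral>\<^sup>+ z. cx j (fst z) * (cy i (snd z) * f (snd z)) \<partial>(\<nu> \<Otimes>\<^sub>M \<mu>)) = ennreal (q j) * (\<integral>\<^sup>+ y. cy i y * f y \<partial>\<mu>)" if "j \<le> MJ" for j i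
        using nn_integral_pair_sep[OF sfin m1 m2, of j i] qdef[OF that] unfolding cx_def by simp
      show ?thesis by (intro sum.cong refl) (simp add: sep)
    qed
    also have "\<dots> = (\<Sum>i\<le>MI. \<Sum>j\<le>MJ. ennreal (G j i) * (ennreal (q j) * (\<integral>\<^sup>+ y. cy i y * f y \<partial>\<mu>)))"
      by (rule sum.swap)
    also have "\<dots> = (\<Sum>i\<le>MI. (\<integral>\<^sup>+ y. cy i y * f y \<partial>\<mu>) * ennreal (\<Sum>j\<le>MJ. G j i * q j))"
    proof (intro sum.cong refl)
      fix i assume "i \<in> {..MI}"
      then have i: "i \<le> MI" by simp
      have "(\<Sum>j\<le>MJ. ennreal (G j i) * (ennreal (q j) * (\<integral>\<^sup>+ y. cy i y * f y \<partial>\<mu>)))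
          = (\<Sum>j\<le>MJ. (\<integral>\<^sup>+ y. cy i y * f y \<partial>\<mu>) * ennreal (G j i * q j))"
        using G0[OF _ i] q0 by (intro sum.cong refl) (simp add: ennreal_mult ac_simps)
      also have "\<dots> = (\<integral>\<^sup>+ y. cy i y * f y \<partial>\<mu>) * ennreal (\<Sum>j\<le>MJ. G j i * q j)"
      proof -
        have "(\<Sum>j\<le>MJ. ennreal (G j i * q j)) = ennreal (\<Sum>j\<le>MJ. G j i * q j)"
          using G0[OF _ i] q0 by (intro sum_ennreal) auto
        then show ?thesis by (simp add: sum_distrib_left[symmetric])
      qed
      finally show "(\<Sum>j\<le>MJ. ennreal (G j i) * (ennreal (q j) * (\<integral>\<^sup>+ y. cy i y * f y \<partial>\<mu>)))
          = (\<integral>\<^sup>+ y. cy i y * f y \<partial>\<mu>) * ennreal (\<Sum>j\<le>MJ. G j i * q j)" .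
    qed
    also have "\<dots> = (\<Sum>i\<le>MI. (\<integral>\<^sup>+ y. cy i y * f y \<partial>\<mu>))"
      using Gq pz[OF _ mf] by (intro sum.cong refl) auto
    also have "\<dots> = (\<integral>\<^sup>+ y. (\<Sum>i\<le>MI. cy i y * f y) \<partial>\<mu>)"
      using m2 by (subst nn_integral_sum) auto
    also have "\<dots> = (\<integral>\<^sup>+ y. f y \<partial>\<mu>)" by (simp add: sum_distrib_right[symmetric] sumy)
    finally show ?thesis .
  qed
  have ms\<pi>: "measurable \<pi> N = measurable borel N" for N using s\<pi> by (intro measurable_cong_sets) auto
  have fstb: "fst \<in> measurable (borel :: ('a\<times>'a) measure) borel" "snd \<in> measurable (borel :: ('a\<times>'a) measure) borel"
    by (intro borel_measurable_continuous_onI continuous_intros)+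
  have "distr \<pi> borel fst = \<nu>"
  proof (rule measure_eqI)
    show "sets (distr \<pi> borel fst) = sets \<nu>" using P1D(2)[OF m(1)] by simp
    fix A assume "A \<in> sets (distr \<pi> borel fst)"
    then have A: "A \<in> sets borel" by simp
    have "emeasure (distr \<pi> borel fst) A = (\<integral>\<^sup>+ x. indicator A x \<partial>distr \<pi> borel fst)" using A by simp
    also have "\<dots> = (\<integral>\<^sup>+ z. indicator A (fst z) \<partial>\<pi>)"
      using A fstb(1) by (intro nn_integral_distr) (auto simp: ms\<pi>)
    also have "\<dots> = (\<integral>\<^sup>+ x. indicator A x \<partial>\<nu>)" using A by (intro margx) simp
    also have "\<dots> = emeasure \<nu> A" using A P1D(2)[OF m(1)] by simp
    finally show "emeasure (distr \<pi> borel fst) A = emeasure \<nu> A" .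
  qed
  moreover have "distr \<pi> borel snd = \<mu>"
  proof (rule measure_eqI)
    show "sets (distr \<pi> borel snd) = sets \<mu>" using P1D(2)[OF m(2)] by simp
    fix A assume "A \<in> sets (distr \<pi> borel snd)"
    then have A: "A \<in> sets borel" by simp
    have "emeasure (distr \<pi> borel snd) A = (\<integral>\<^sup>+ x. indicator A x \<partial>distr \<pi> borel snd)" using A by simp
    also have "\<dots> = (\<integral>\<^sup>+ z. indicator A (snd z) \<partial>\<pi>)"
      using A fstb(2) by (intro nn_integral_distr) (auto simp: ms\<pi>)
    also have "\<dots> = (\<integral>\<^sup>+ x. indicator A x \<partial>\<mu>)" using A by (intro margy) simp
    also have "\<dots> = emeasure \<mu> A" using A P1D(2)[OF m(2)] by simp
    finally show "emeasure (distr \<pi> borel snd) A = emeasure \<mu> A" .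
  qed
  moreover have "prob_space \<pi>"
  proof (rule prob_spaceI)
    have "emeasure \<pi> (space \<pi>) = (\<integral>\<^sup>+ z. (\<lambda>_. 1) (fst z) \<partial>\<pi>)"
      by (simp add: s\<pi> sets_eq_imp_space_eq[OF s\<pi>])
    also have "\<dots> = (\<integral>\<^sup>+ x. 1 \<partial>\<nu>)" by (intro margx) simp
    also have "\<dots> = 1" using n.emeasure_space_1 by simp
    finally show "emeasure \<pi> (space \<pi>) = 1" .
  qed
  ultimately have cpl: "\<pi> \<in> couplings \<nu> \<mu>" unfolding couplings_def using s\<pi> by auto
  define \<alpha> where "\<alpha> = (\<lambda>(j::nat) (x::'a). if j = 0 then 2 * dist x0 x else 0)"
  define \<alpha>' where "\<alpha>' = (\<lambda>(i::nat) (y::'a). if i = 0 then 2 * dist x0 y else 0)"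
  define K where "K = (\<lambda>j i. cmat b a j i + 2 * \<epsilon>)"
  have K0: "0 \<le> K j i" for j i unfolding K_def cmat_def using \<epsilon> by auto
  have \<alpha>0: "0 \<le> \<alpha> j x" "0 \<le> \<alpha>' j x" for j x unfolding \<alpha>_def \<alpha>'_def by auto
  have geo: "dist x y \<le> K j i + \<alpha> j x + \<alpha>' i y"
    if "j \<le> MJ" "i \<le> MI" "ch j x \<noteq> 0" "\<phi> i y \<noteq> 0" for j i x y
  proof (cases "j = 0")
    case True
    then have Rx: "R < dist x0 x" using X(6) that by auto
    show ?thesis
    proof (cases "i = 0")
      case True
      have h: "dist x y \<le> dist x0 x + dist x0 y" "0 \<le> dist x0 x" "0 \<le> dist x0 y"
        by (auto intro: dist_triangle3)
      show ?thesis using \<open>j = 0\<close> True \<epsilon> unfolding K_def cmat_def \<alpha>_def \<alpha>'_def using h by (simp; linarith)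
    next
      case False
      then have "i \<in> {1..MI}" using that by auto
      then have "dist y (a i) < \<epsilon>" "dist x0 (a i) \<le> R" using Y(4,5) that by auto
      then have "dist x0 y < R + \<epsilon>" using dist_triangle[of x0 y "a i"] by (simp add: dist_commute)
      then show ?thesis using \<open>j = 0\<close> False Rx dist_triangle3[of x y x0] \<epsilon> unfolding K_def cmat_def \<alpha>_def \<alpha>'_def by auto
    qed
  next
    case False
    then have "j \<in> {1..MJ}" using that by auto
    then have xb: "dist x (b j) < \<epsilon>" "dist x0 (b j) \<le> R" using X(4,5) that by auto
    show ?thesis
    proof (cases "i = 0")
      case True
      then have Ry: "R < dist x0 y" using Y(6) that by auto
      have "dist x0 x < R + \<epsilon>" using xb dist_triangle[of x0 x "b j"] by (simp add: dist_commute)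
      then show ?thesis using \<open>i = 0\<close> False Ry dist_triangle3[of x y x0] \<epsilon> unfolding K_def cmat_def \<alpha>_def \<alpha>'_def by auto
    next
      case False
      then have "i \<in> {1..MI}" using that by auto
      then have "dist y (a i) < \<epsilon>" using Y(4) that by auto
      moreover have "dist x y \<le> dist x (b j) + dist (b j) (a i) + dist (a i) y"
        using dist_triangle[of x y "b j"] dist_triangle[of "b j" y "a i"] by linarith
      ultimately show ?thesis using \<open>j \<noteq> 0\<close> False xb unfolding K_def cmat_def \<alpha>_def \<alpha>'_def by (auto simp: dist_commute)
    qed
  qed
  define A where "A = (\<lambda>j. \<integral>\<^sup>+ x. cx j x * ennreal (\<alpha> j x) \<partial>\<nu>)"
  define A' where "A' = (\<lambda>i. \<integral>\<^sup>+ y. cy i y * ennreal (\<alpha>' i y) \<partial>\<mu>)"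
  have \<alpha>c: "continuous_on UNIV (\<alpha> j)" "continuous_on UNIV (\<alpha>' j)" for j
    unfolding \<alpha>_def \<alpha>'_def by (cases "j = 0"; auto intro!: continuous_intros)+
  have ma1: "(\<lambda>x. cx j x * ennreal (\<alpha> j x)) \<in> borel_measurable \<nu>" for j
    using P1_meas_comp[OF m(1) mcx[of j]] P1_meas_comp[OF m(1) cont_ennreal_meas[OF \<alpha>c(1)[of j]]] by measurable
  have ma2: "(\<lambda>y. cy i y * ennreal (\<alpha>' i y)) \<in> borel_measurable \<mu>" for i
    using P1_meas_comp[OF m(2) mcy[of i]] P1_meas_comp[OF m(2) cont_ennreal_meas[OF \<alpha>c(2)[of i]]] by measurable
  have mx: "cx j \<in> borel_measurable \<nu>" for j using P1_meas_comp[OF m(1) mcx[of j]] .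
  have my: "cy i \<in> borel_measurable \<mu>" for i using P1_meas_comp[OF m(2) mcy[of i]] .
  have myK: "(\<lambda>y. cy i y * ennreal (K j i)) \<in> borel_measurable \<mu>" for i j using my[of i] by measurable
  define T where "T = (\<lambda>j i z. cx j (fst z) * (cy i (snd z) * ennreal (K j i)) + (cx j (fst z) * ennreal (\<alpha> j (fst z))) * cy i (snd z)
      + cx j (fst z) * (cy i (snd z) * ennreal (\<alpha>' i (snd z))))"
  have intT: "(\<integral>\<^sup>+ z. T j i z \<partial>(\<nu> \<Otimes>\<^sub>M \<mu>)) = ennreal (q j) * (ennreal (p i) * ennreal (K j i)) + A j * ennreal (p i) + ennreal (q j) * A' i" if ji: "j \<le> MJ" "i \<le> MI" for j i
  proof -
    have i1: "(\<integral>\<^sup>+ z. cx j (fst z) * (cy i (snd z) * ennreal (K j i)) \<partial>(\<nu> \<Otimes>\<^sub>M \<mu>)) = ennreal (q j) * (ennreal (p i) * ennreal (K j i))"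
      using nn_integral_pair_sep[OF sfin mx myK, of j i] qdef[OF ji(1)] pdef[OF ji(2)] my[of i]
      unfolding cx_def cy_def by (simp add: nn_integral_multc)
    have i2: "(\<integral>\<^sup>+ z. (cx j (fst z) * ennreal (\<alpha> j (fst z))) * cy i (snd z) \<partial>(\<nu> \<Otimes>\<^sub>M \<mu>)) = A j * ennreal (p i)"
      using nn_integral_pair_sep[OF sfin ma1 my, of j i] pdef[OF ji(2)] unfolding A_def cy_def by simp
    have i3: "(\<integral>\<^sup>+ z. cx j (fst z) * (cy i (snd z) * ennreal (\<alpha>' i (snd z))) \<partial>(\<nu> \<Otimes>\<^sub>M \<mu>)) = ennreal (q j) * A' i"
      using nn_integral_pair_sep[OF sfin mx ma2, of j i] qdef[OF ji(1)] unfolding A'_def cx_def by simp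
    have b1: "(\<lambda>z. cx j (fst z) * (cy i (snd z) * ennreal (K j i))) \<in> borel_measurable (\<nu> \<Otimes>\<^sub>M \<mu>)"
      using mx[of j] myK[of i j] by measurable
    have b2: "(\<lambda>z. (cx j (fst z) * ennreal (\<alpha> j (fst z))) * cy i (snd z)) \<in> borel_measurable (\<nu> \<Otimes>\<^sub>M \<mu>)"
      using ma1[of j] my[of i] by measurable
    have b3: "(\<lambda>z. cx j (fst z) * (cy i (snd z) * ennreal (\<alpha>' i (snd z)))) \<in> borel_measurable (\<nu> \<Otimes>\<^sub>M \<mu>)"
      using mx[of j] ma2[of i] by measurable
    show ?thesis unfolding T_def using b1 b2 b3 by (simp add: nn_integral_add i1 i2 i3)
  qed
  have mT: "T j i \<in> borel_measurable (\<nu> \<Otimes>\<^sub>M \<mu>)" for j i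
    unfolding T_def using mx[of j] myK[of i j] ma1[of j] my[of i] ma2[of i] by measurable
  have snm: "sets (\<nu> \<Otimes>\<^sub>M \<mu>) = sets borel"
    using sets_pair_measure_cong[OF P1D(2)[OF m(1)] P1D(2)[OF m(2)]] proper_sets_prod[OF P] by simp
  have mdist: "(\<lambda>z. ennreal (dist (fst z) (snd z))) \<in> borel_measurable (\<nu> \<Otimes>\<^sub>M \<mu>)"
  proof -
    have "(\<lambda>z::'a\<times>'a. ennreal (dist (fst z) (snd z))) \<in> borel_measurable borel"
      by (intro cont_ennreal_meas continuous_intros)
    then show ?thesis by (subst measurable_cong_sets[OF snm refl])
  qed
  have sq: "(\<Sum>j\<le>MJ. q j) = 1"
  proof -
    have "ennreal (\<Sum>j\<le>MJ. q j) = (\<Sum>j\<le>MJ. ennreal (q j))" using q0 by (intro sum_ennreal[symmetric]) auto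
    also have "\<dots> = (\<Sum>j\<le>MJ. \<integral>\<^sup>+ x. cx j x \<partial>\<nu>)" using qdef by (intro sum.cong refl) (auto simp: cx_def)
    also have "\<dots> = (\<integral>\<^sup>+ x. (\<Sum>j\<le>MJ. cx j x) \<partial>\<nu>)" using mx by (subst nn_integral_sum) auto
    also have "\<dots> = 1" using sumx n.emeasure_space_1 by simp
    finally show ?thesis using q0 by (subst (asm) ennreal_eq_1) (auto intro: sum_nonneg)
  qed
  have sg: "(\<Sum>j\<le>MJ. \<Sum>i\<le>MI. \<gamma> j i) = 1" using row sq by simp
  have "cost \<pi> = (\<integral>\<^sup>+ z. dens z * ennreal (dist (fst z) (snd z)) \<partial>(\<nu> \<Otimes>\<^sub>M \<mu>))"
    unfolding cost_def by (rule int\<pi>[OF mdist])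
  also have "\<dots> \<le> (\<integral>\<^sup>+ z. (\<Sum>j\<le>MJ. \<Sum>i\<le>MI. ennreal (G j i) * T j i z) \<partial>(\<nu> \<Otimes>\<^sub>M \<mu>))"
  proof (intro nn_integral_mono)
    fix z :: "'a \<times> 'a"
    have "dens z * ennreal (dist (fst z) (snd z)) = (\<Sum>j\<le>MJ. \<Sum>i\<le>MI. ennreal (G j i) * (cx j (fst z) * cy i (snd z) * ennreal (dist (fst z) (snd z))))"
      unfolding dens_def sum_distrib_right by (simp add: ac_simps)
    also have "\<dots> \<le> (\<Sum>j\<le>MJ. \<Sum>i\<le>MI. ennreal (G j i) * T j i z)"
    proof (intro sum_mono mult_left_mono)
      fix j i assume "j \<in> {..MJ}" "i \<in> {..MI}"
      then have ji: "j \<le> MJ" "i \<le> MI" by auto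
      show "cx j (fst z) * cy i (snd z) * ennreal (dist (fst z) (snd z)) \<le> T j i z"
        unfolding T_def cx_def cy_def
        by (rule ptw2_ennreal) (use X(1) Y(1) K0 \<alpha>0 geo[OF ji] in auto)
    qed auto
    finally show "dens z * ennreal (dist (fst z) (snd z)) \<le> (\<Sum>j\<le>MJ. \<Sum>i\<le>MI. ennreal (G j i) * T j i z)" .
  qed
  also have "\<dots> = (\<Sum>j\<le>MJ. \<Sum>i\<le>MI. ennreal (G j i) * (ennreal (q j) * (ennreal (p i) * ennreal (K j i)) + A j * ennreal (p i) + ennreal (q j) * A' i))"
    using mT by (simp add: nn_integral_sum nn_integral_cmult borel_measurable_sum) (intro sum.cong refl, simp add: intT)
  also have "\<dots> = (\<Sum>j\<le>MJ. \<Sum>i\<le>MI. ennreal (\<gamma> j i * K j i) + A j * ennreal (G j i * p i) + A' i * ennreal (G j i * q j))"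
  proof (intro sum.cong refl)
    fix j i assume "j \<in> {..MJ}" "i \<in> {..MI}"
    then have ji: "j \<le> MJ" "i \<le> MI" by auto
    have e1: "ennreal (G j i) * (ennreal (q j) * (ennreal (p i) * ennreal (K j i))) = ennreal (\<gamma> j i * K j i)"
    proof -
      have "ennreal (G j i) * (ennreal (q j) * (ennreal (p i) * ennreal (K j i))) = ennreal (G j i * (q j * p i) * K j i)"
        using G0[OF ji] q0[OF ji(1)] p0[OF ji(2)] K0[of j i] by (simp add: ennreal_mult mult_nonneg_nonneg ac_simps)
      then show ?thesis using Gqp[OF ji] by simp
    qed
    have e2: "ennreal (G j i) * (A j * ennreal (p i)) = A j * ennreal (G j i * p i)"
      using G0[OF ji] p0[OF ji(2)] by (simp add: ennreal_mult ac_simps)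
    have e3: "ennreal (G j i) * (ennreal (q j) * A' i) = A' i * ennreal (G j i * q j)"
      using G0[OF ji] q0[OF ji(1)] by (simp add: ennreal_mult ac_simps)
    show "ennreal (G j i) * (ennreal (q j) * (ennreal (p i) * ennreal (K j i)) + A j * ennreal (p i) + ennreal (q j) * A' i) =
        ennreal (\<gamma> j i * K j i) + A j * ennreal (G j i * p i) + A' i * ennreal (G j i * q j)"
      by (simp add: distrib_left e1 e2 e3)
  qed
  also have "\<dots> = (\<Sum>j\<le>MJ. \<Sum>i\<le>MI. ennreal (\<gamma> j i * K j i)) + (\<Sum>j\<le>MJ. A j * (\<Sum>i\<le>MI. ennreal (G j i * p i)))
       + (\<Sum>i\<le>MI. A' i * (\<Sum>j\<le>MJ. ennreal (G j i * q j)))"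
    by (simp add: sum.distrib sum_distrib_left sum.swap[of _ "{..MI}" "{..MJ}"])
  also have "\<dots> \<le> ennreal ((\<Sum>j\<le>MJ. \<Sum>i\<le>MI. \<gamma> j i * cmat b a j i) + 2 * \<epsilon>) + (\<Sum>j\<le>MJ. A j) + (\<Sum>i\<le>MI. A' i)"
  proof (intro add_mono sum_mono)
    have "(\<Sum>j\<le>MJ. \<Sum>i\<le>MI. ennreal (\<gamma> j i * K j i)) = ennreal (\<Sum>j\<le>MJ. \<Sum>i\<le>MI. \<gamma> j i * K j i)"
      using g0 K0 by (simp add: sum_nonneg mult_nonneg_nonneg)
    also have "(\<Sum>j\<le>MJ. \<Sum>i\<le>MI. \<gamma> j i * K j i) = (\<Sum>j\<le>MJ. \<Sum>i\<le>MI. \<gamma> j i * cmat b a j i) + 2 * \<epsilon> * (\<Sum>j\<le>MJ. \<Sum>i\<le>MI. \<gamma> j i)"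
      unfolding K_def by (simp add: distrib_left sum.distrib sum_distrib_left ac_simps)
    finally show "(\<Sum>j\<le>MJ. \<Sum>i\<le>MI. ennreal (\<gamma> j i * K j i)) \<le> ennreal ((\<Sum>j\<le>MJ. \<Sum>i\<le>MI. \<gamma> j i * cmat b a j i) + 2 * \<epsilon>)"
      using sg by simp
  next
    fix j assume "j \<in> {..MJ}"
    then have j: "j \<le> MJ" by simp
    have "(\<Sum>i\<le>MI. ennreal (G j i * p i)) = ennreal (\<Sum>i\<le>MI. G j i * p i)"
      using G0[OF j] p0 by (intro sum_ennreal) auto
    also have "\<dots> \<le> 1" using Gp[OF j] by simp
    finally show "A j * (\<Sum>i\<le>MI. ennreal (G j i * p i)) \<le> A j" by (metis mult_left_mono mult.right_neutral zero_le)
  next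
    fix i assume "i \<in> {..MI}"
    then have i: "i \<le> MI" by simp
    have "(\<Sum>j\<le>MJ. ennreal (G j i * q j)) = ennreal (\<Sum>j\<le>MJ. G j i * q j)"
      using G0[OF _ i] q0 by (intro sum_ennreal) auto
    also have "\<dots> \<le> 1" using Gq[OF i] by simp
    finally show "A' i * (\<Sum>j\<le>MJ. ennreal (G j i * q j)) \<le> A' i" by (metis mult_left_mono mult.right_neutral zero_le)
  qed
  also have "(\<Sum>j\<le>MJ. A j) \<le> 2 * (\<integral>\<^sup>+ x. ennreal (dist x0 x) * indicator {x. R < dist x0 x} x \<partial>\<nu>)"
  proof -
    have "(\<Sum>j\<le>MJ. A j) = (\<integral>\<^sup>+ x. (\<Sum>j\<le>MJ. cx j x * ennreal (\<alpha> j x)) \<partial>\<nu>)"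
      unfolding A_def using ma1 by (subst nn_integral_sum) auto
    also have "\<dots> \<le> (\<integral>\<^sup>+ x. 2 * (ennreal (dist x0 x) * indicator {x. R < dist x0 x} x) \<partial>\<nu>)"
    proof (intro nn_integral_mono)
      fix x
      have "(\<Sum>j\<le>MJ. cx j x * ennreal (\<alpha> j x)) = cx 0 x * ennreal (\<alpha> 0 x) + (\<Sum>j\<in>{Suc 0..MJ}. cx j x * ennreal (\<alpha> j x))"
        by (simp add: atMost_atLeast0 sum.atLeast_Suc_atMost)
      also have "(\<Sum>j\<in>{Suc 0..MJ}. cx j x * ennreal (\<alpha> j x)) = 0" unfolding \<alpha>_def by simp
      also have "cx 0 x * ennreal (\<alpha> 0 x) \<le> 2 * (ennreal (dist x0 x) * indicator {x. R < dist x0 x} x)"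
      proof (cases "ch 0 x = 0")
        case False
        then have "R < dist x0 x" using X(6) by auto
        have "ch 0 x * (2 * dist x0 x) \<le> 1 * (2 * dist x0 x)"
          using PU_le1[OF pu1, of 0 x] by (intro mult_right_mono) auto
        then have "ennreal (ch 0 x * (2 * dist x0 x)) \<le> ennreal (2 * dist x0 x)" by (intro ennreal_leI) simp
        moreover have "ennreal (ch 0 x) * ennreal (2 * dist x0 x) = ennreal (ch 0 x * (2 * dist x0 x))"
          using X(1)[of 0 x] by (simp add: ennreal_mult)
        moreover have "2 * (ennreal (dist x0 x) * indicator {x. R < dist x0 x} x) = ennreal (2 * dist x0 x)"
          using \<open>R < dist x0 x\<close> by (simp add: ennreal_mult)
        ultimately show ?thesis unfolding cx_def \<alpha>_def by simp
      qed (simp add: cx_def)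
      finally show "(\<Sum>j\<le>MJ. cx j x * ennreal (\<alpha> j x)) \<le> 2 * (ennreal (dist x0 x) * indicator {x. R < dist x0 x} x)" by simp
    qed
    also have "\<dots> = 2 * (\<integral>\<^sup>+ x. ennreal (dist x0 x) * indicator {x. R < dist x0 x} x \<partial>\<nu>)"
    proof -
      have "{x. R < dist x0 x} \<in> sets borel" by (intro borel_open open_Collect_less continuous_intros)
      then show ?thesis using dist_ennreal_meas[of x0] by (intro nn_integral_cmult) (simp add: measurable_P1[OF m(1)])
    qed
    finally show ?thesis .
  qed
  also have "(\<Sum>i\<le>MI. A' i) \<le> 2 * (\<integral>\<^sup>+ x. ennreal (dist x0 x) * indicator {x. R < dist x0 x} x \<partial>\<mu>)"
  proof -
    have "(\<Sum>i\<le>MI. A' i) = (\<integral>\<^sup>+ y. (\<Sum>i\<le>MI. cy i y * ennreal (\<alpha>' i y)) \<partial>\<mu>)"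
      unfolding A'_def using ma2 by (subst nn_integral_sum) auto
    also have "\<dots> \<le> (\<integral>\<^sup>+ x. 2 * (ennreal (dist x0 x) * indicator {x. R < dist x0 x} x) \<partial>\<mu>)"
    proof (intro nn_integral_mono)
      fix x
      have "(\<Sum>i\<le>MI. cy i x * ennreal (\<alpha>' i x)) = cy 0 x * ennreal (\<alpha>' 0 x) + (\<Sum>i\<in>{Suc 0..MI}. cy i x * ennreal (\<alpha>' i x))"
        by (simp add: atMost_atLeast0 sum.atLeast_Suc_atMost)
      also have "(\<Sum>i\<in>{Suc 0..MI}. cy i x * ennreal (\<alpha>' i x)) = 0" unfolding \<alpha>'_def by simp
      also have "cy 0 x * ennreal (\<alpha>' 0 x) \<le> 2 * (ennreal (dist x0 x) * indicator {x. R < dist x0 x} x)"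
      proof (cases "\<phi> 0 x = 0")
        case False
        then have "R < dist x0 x" using Y(6) by auto
        have "\<phi> 0 x * (2 * dist x0 x) \<le> 1 * (2 * dist x0 x)"
          using PU_le1[OF pu2, of 0 x] by (intro mult_right_mono) auto
        then have "ennreal (\<phi> 0 x * (2 * dist x0 x)) \<le> ennreal (2 * dist x0 x)" by (intro ennreal_leI) simp
        moreover have "ennreal (\<phi> 0 x) * ennreal (2 * dist x0 x) = ennreal (\<phi> 0 x * (2 * dist x0 x))"
          using Y(1)[of 0 x] by (simp add: ennreal_mult)
        moreover have "2 * (ennreal (dist x0 x) * indicator {x. R < dist x0 x} x) = ennreal (2 * dist x0 x)"
          using \<open>R < dist x0 x\<close> by (simp add: ennreal_mult)
        ultimately show ?thesis unfolding cy_def \<alpha>'_def by simp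
      qed (simp add: cy_def)
      finally show "(\<Sum>i\<le>MI. cy i x * ennreal (\<alpha>' i x)) \<le> 2 * (ennreal (dist x0 x) * indicator {x. R < dist x0 x} x)" by simp
    qed
    also have "\<dots> = 2 * (\<integral>\<^sup>+ x. ennreal (dist x0 x) * indicator {x. R < dist x0 x} x \<partial>\<mu>)"
    proof -
      have "{x. R < dist x0 x} \<in> sets borel" by (intro borel_open open_Collect_less continuous_intros)
      then show ?thesis using dist_ennreal_meas[of x0] by (intro nn_integral_cmult) (simp add: measurable_P1[OF m(2)])
    qed
    finally show ?thesis .
  qed
  finally have "cost \<pi> \<le> ennreal ((\<Sum>j\<le>MJ. \<Sum>i\<le>MI. \<gamma> j i * cmat b a j i) + 2 * \<epsilon>)
     + 2 * (\<integral>\<^sup>+ x. ennreal (dist x0 x) * indicator {x. R < dist x0 x} x \<partial>\<nu>)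
     + 2 * (\<integral>\<^sup>+ x. ennreal (dist x0 x) * indicator {x. R < dist x0 x} x \<partial>\<mu>)"
    by (simp add: add_mono)
  then show ?thesis using cpl by blast
qed

lemma PU_nn_le1:
  assumes "PU x0 R e m b ch" "j \<le> m" "M \<in> P1"
  shows "(\<integral>\<^sup>+ x. ennreal (ch j x) \<partial>M) \<le> 1"
proof -
  have "(\<integral>\<^sup>+ x. ennreal (ch j x) \<partial>M) \<le> (\<integral>\<^sup>+ x. 1 \<partial>M)"
    using PU_le1[OF assms(1,2)] by (intro nn_integral_mono) (auto simp: ennreal_le_1)
  then show ?thesis using prob_space.emeasure_space_1[OF P1D(1)[OF assms(3)]] by simp
qed

lemma PU_nq:
  assumes "PU x0 R e m b ch" "j \<le> m" "M \<in> P1"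
  shows "ennreal (enn2real (\<integral>\<^sup>+ x. ennreal (ch j x) \<partial>M)) = (\<integral>\<^sup>+ x. ennreal (ch j x) \<partial>M)"
  by (intro ennreal_enn2real, subst less_top[symmetric], intro neq_top_trans[OF ennreal_one_neq_top PU_nn_le1[OF assms]])

lemma PU_sum1:
  assumes "PU x0 R e m b ch" "M \<in> P1"
  shows "(\<Sum>j\<le>m. enn2real (\<integral>\<^sup>+ x. ennreal (ch j x) \<partial>M)) = 1"
proof -
  note X = PU_D[OF assms(1)]
  have "ennreal (\<Sum>j\<le>m. enn2real (\<integral>\<^sup>+ x. ennreal (ch j x) \<partial>M)) = (\<Sum>j\<le>m. ennreal (enn2real (\<integral>\<^sup>+ x. ennreal (ch j x) \<partial>M)))"
    by (intro sum_ennreal[symmetric]) auto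
  also have "\<dots> = (\<Sum>j\<le>m. (\<integral>\<^sup>+ x. ennreal (ch j x) \<partial>M))"
    using PU_nq[OF assms(1) _ assms(2)] by simp
  also have "\<dots> = (\<integral>\<^sup>+ x. (\<Sum>j\<le>m. ennreal (ch j x)) \<partial>M)"
    using X(3) by (subst nn_integral_sum) (auto simp: measurable_P1[OF assms(2)] intro: cont_ennreal_meas)
  also have "\<dots> = 1" using X(1,2) prob_space.emeasure_space_1[OF P1D(1)[OF assms(2)]] by (simp add: sum_ennreal)
  finally show ?thesis by (subst (asm) ennreal_eq_1) (auto intro: sum_nonneg)
qed

lemma lower_bound:
  fixes \<nu> \<mu> :: "'a::metric_space measure"
  assumes P: "proper_space TYPE('a)" and m: "\<nu> \<in> P1" "\<mu> \<in> P1" and c: "\<pi> \<in> couplings \<nu> \<mu>"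
    and pu1: "PU x0 R \<epsilon> MJ b ch" and pu2: "PU x0 R \<epsilon> MI a \<phi>" and \<epsilon>: "\<epsilon> > 0"
  defines "\<gamma> \<equiv> (\<lambda>j i. enn2real (\<integral>\<^sup>+ z. ennreal (ch j (fst z) * \<phi> i (snd z)) \<partial>\<pi>))"
  shows "\<And>j i. 0 \<le> \<gamma> j i"
    "\<And>j. j \<le> MJ \<Longrightarrow> (\<Sum>i\<le>MI. \<gamma> j i) = enn2real (\<integral>\<^sup>+ x. ennreal (ch j x) \<partial>\<nu>)"
    "\<And>i. i \<le> MI \<Longrightarrow> (\<Sum>j\<le>MJ. \<gamma> j i) = enn2real (\<integral>\<^sup>+ y. ennreal (\<phi> i y) \<partial>\<mu>)"
    "ennreal (\<Sum>j\<le>MJ. \<Sum>i\<le>MI. \<gamma> j i * cmat b a j i) \<le> cost \<pi> + ennreal (2 * \<epsilon>)"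
proof -
  note X = PU_D[OF pu1]
  note Y = PU_D[OF pu2]
  interpret pr: prob_space \<pi> using couplingsD(1)[OF c] .
  show "\<And>j i. 0 \<le> \<gamma> j i" unfolding \<gamma>_def by simp
  have mz: "(\<lambda>z. ennreal (ch j (fst z) * \<phi> i (snd z))) \<in> borel_measurable \<pi>" for j i
    by (intro coupling_meas[OF c] continuous_intros cont_fst_comp cont_snd_comp X(3) Y(3))
  have fin: "(\<integral>\<^sup>+ z. ennreal (ch j (fst z) * \<phi> i (snd z)) \<partial>\<pi>) \<le> 1" if "j \<le> MJ" "i \<le> MI" for j i
  proof -
    have "(\<integral>\<^sup>+ z. ennreal (ch j (fst z) * \<phi> i (snd z)) \<partial>\<pi>) \<le> (\<integral>\<^sup>+ z. 1 \<partial>\<pi>)"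
      using PU_le1[OF pu1 that(1)] PU_le1[OF pu2 that(2)] X(1) Y(1)
      by (intro nn_integral_mono) (auto simp: ennreal_le_1 intro!: mult_le_one)
    then show ?thesis using pr.emeasure_space_1 by simp
  qed
  have eg: "ennreal (\<gamma> j i) = (\<integral>\<^sup>+ z. ennreal (ch j (fst z) * \<phi> i (snd z)) \<partial>\<pi>)" if "j \<le> MJ" "i \<le> MI" for j i
    unfolding \<gamma>_def by (intro ennreal_enn2real, subst less_top[symmetric], intro neq_top_trans[OF ennreal_one_neq_top fin[OF that]])
  show "(\<Sum>i\<le>MI. \<gamma> j i) = enn2real (\<integral>\<^sup>+ x. ennreal (ch j x) \<partial>\<nu>)" if j: "j \<le> MJ" for j
  proof -
    have "ennreal (\<Sum>i\<le>MI. \<gamma> j i) = (\<Sum>i\<le>MI. ennreal (\<gamma> j i))" by (intro sum_ennreal[symmetric]) (simp add: \<gamma>_def)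
    also have "\<dots> = (\<Sum>i\<le>MI. (\<integral>\<^sup>+ z. ennreal (ch j (fst z) * \<phi> i (snd z)) \<partial>\<pi>))" using eg j by simp
    also have "\<dots> = (\<integral>\<^sup>+ z. (\<Sum>i\<le>MI. ennreal (ch j (fst z) * \<phi> i (snd z))) \<partial>\<pi>)"
      using mz by (subst nn_integral_sum) auto
    also have "\<dots> = (\<integral>\<^sup>+ z. ennreal (ch j (fst z)) \<partial>\<pi>)"
      using X(1) Y(1) by (intro nn_integral_cong) (simp add: sum_distrib_left[symmetric] Y(2) mult_nonneg_nonneg)
    also have "\<dots> = (\<integral>\<^sup>+ x. ennreal (ch j x) \<partial>\<nu>)"
      by (rule couplings_fst_integral[OF c cont_ennreal_meas[OF X(3)]])
    finally show ?thesis by (metis enn2real_ennreal sum_nonneg \<open>\<And>j i. 0 \<le> \<gamma> j i\<close>)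
  qed
  show "(\<Sum>j\<le>MJ. \<gamma> j i) = enn2real (\<integral>\<^sup>+ y. ennreal (\<phi> i y) \<partial>\<mu>)" if i: "i \<le> MI" for i
  proof -
    have "ennreal (\<Sum>j\<le>MJ. \<gamma> j i) = (\<Sum>j\<le>MJ. ennreal (\<gamma> j i))" by (intro sum_ennreal[symmetric]) (simp add: \<gamma>_def)
    also have "\<dots> = (\<Sum>j\<le>MJ. (\<integral>\<^sup>+ z. ennreal (ch j (fst z) * \<phi> i (snd z)) \<partial>\<pi>))" using eg i by simp
    also have "\<dots> = (\<integral>\<^sup>+ z. (\<Sum>j\<le>MJ. ennreal (ch j (fst z) * \<phi> i (snd z))) \<partial>\<pi>)"
      using mz by (subst nn_integral_sum) auto
    also have "\<dots> = (\<integral>\<^sup>+ z. ennreal (\<phi> i (snd z)) \<partial>\<pi>)"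
      using X(1) Y(1) by (intro nn_integral_cong) (simp add: sum_distrib_right[symmetric] X(2) mult_nonneg_nonneg)
    also have "\<dots> = (\<integral>\<^sup>+ y. ennreal (\<phi> i y) \<partial>\<mu>)"
      by (rule couplings_snd_integral[OF c cont_ennreal_meas[OF Y(3)]])
    finally show ?thesis by (metis enn2real_ennreal sum_nonneg \<open>\<And>j i. 0 \<le> \<gamma> j i\<close>)
  qed
  have cm0: "0 \<le> cmat b a j i" for j i unfolding cmat_def by auto
  have g0: "0 \<le> \<gamma> j i" for j i unfolding \<gamma>_def by simp
  have nn: "0 \<le> \<gamma> j i * cmat b a j i" for j i using g0 cm0 by simp
  have "ennreal (\<Sum>j\<le>MJ. \<Sum>i\<le>MI. \<gamma> j i * cmat b a j i) = (\<Sum>j\<le>MJ. ennreal (\<Sum>i\<le>MI. \<gamma> j i * cmat b a j i))"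
    by (rule sum_ennreal[symmetric]) (auto intro: sum_nonneg nn)
  also have "\<dots> = (\<Sum>j\<le>MJ. \<Sum>i\<le>MI. ennreal (\<gamma> j i * cmat b a j i))"
    by (intro sum.cong refl sum_ennreal[symmetric]) (auto intro: nn)
  also have "\<dots> = (\<Sum>j\<le>MJ. \<Sum>i\<le>MI. ennreal (\<gamma> j i) * ennreal (cmat b a j i))"
    by (intro sum.cong refl ennreal_mult g0 cm0)
  also have "\<dots> = (\<Sum>j\<le>MJ. \<Sum>i\<le>MI. (\<integral>\<^sup>+ z. ennreal (ch j (fst z) * \<phi> i (snd z) * cmat b a j i) \<partial>\<pi>))"
  proof (intro sum.cong refl)
    fix j i assume "j \<in> {..MJ}" "i \<in> {..MI}"
    then show "ennreal (\<gamma> j i) * ennreal (cmat b a j i) = (\<integral>\<^sup>+ z. ennreal (ch j (fst z) * \<phi> i (snd z) * cmat b a j i) \<partial>\<pi>)"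
      using eg[of j i] mz[of j i] cm0[of j i] X(1) Y(1)
      by (simp add: nn_integral_multc[symmetric] ennreal_mult mult_nonneg_nonneg)
  qed
  also have "\<dots> = (\<integral>\<^sup>+ z. (\<Sum>j\<le>MJ. \<Sum>i\<le>MI. ennreal (ch j (fst z) * \<phi> i (snd z) * cmat b a j i)) \<partial>\<pi>)"
  proof -
    have "(\<lambda>z. ennreal (ch j (fst z) * \<phi> i (snd z) * cmat b a j i)) \<in> borel_measurable \<pi>" for j i
      by (intro coupling_meas[OF c] continuous_intros cont_fst_comp cont_snd_comp X(3) Y(3))
    then show ?thesis by (simp add: nn_integral_sum borel_measurable_sum)
  qed
  also have "\<dots> \<le> (\<integral>\<^sup>+ z. ennreal (dist (fst z) (snd z)) + ennreal (2 * \<epsilon>) \<partial>\<pi>)"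
  proof (intro nn_integral_mono)
    fix z :: "'a \<times> 'a"
    obtain x y where z: "z = (x, y)" by force
    have le: "ch j x * \<phi> i y * cmat b a j i \<le> ch j x * \<phi> i y * (dist x y + 2 * \<epsilon>)" if "j \<le> MJ" "i \<le> MI" for j i
    proof (cases "ch j x * \<phi> i y = 0")
      case False
      then have nz: "ch j x \<noteq> 0" "\<phi> i y \<noteq> 0" by auto
      have "cmat b a j i \<le> dist x y + 2 * \<epsilon>"
      proof (cases "0 < j \<and> 0 < i")
        case True
        then have "j \<in> {1..MJ}" "i \<in> {1..MI}" using that by auto
        then have "dist x (b j) < \<epsilon>" "dist y (a i) < \<epsilon>" using X(4) Y(4) nz by auto
        moreover have "dist (b j) (a i) \<le> dist (b j) x + dist x y + dist y (a i)"
          using dist_triangle[of "b j" "a i" x] dist_triangle[of x "a i" y] by linarith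
        ultimately show ?thesis unfolding cmat_def using True by (simp add: dist_commute)
      next
        case False then show ?thesis unfolding cmat_def using \<epsilon> by auto
      qed
      then show ?thesis using X(1)[of j x] Y(1)[of i y] by (intro mult_left_mono) auto
    next
      case True then show ?thesis by auto
    qed
    have "(\<Sum>j\<le>MJ. \<Sum>i\<le>MI. ch j x * \<phi> i y * cmat b a j i) \<le> (\<Sum>j\<le>MJ. \<Sum>i\<le>MI. ch j x * \<phi> i y * (dist x y + 2 * \<epsilon>))"
      using le by (intro sum_mono) auto
    also have "\<dots> = dist x y + 2 * \<epsilon>"
      by (simp add: sum_distrib_right[symmetric] sum_distrib_left[symmetric] X(2) Y(2))
    finally have "ennreal (\<Sum>j\<le>MJ. \<Sum>i\<le>MI. ch j x * \<phi> i y * cmat b a j i) \<le> ennreal (dist x y) + ennreal (2 * \<epsilon>)"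
      using \<epsilon> by (simp add: ennreal_plus[symmetric] del: ennreal_plus)
    moreover have "ennreal (\<Sum>j\<le>MJ. \<Sum>i\<le>MI. ch j x * \<phi> i y * cmat b a j i) = (\<Sum>j\<le>MJ. \<Sum>i\<le>MI. ennreal (ch j x * \<phi> i y * cmat b a j i))"
      using X(1) Y(1) cm0 by (simp add: sum_nonneg mult_nonneg_nonneg)
    ultimately show "(\<Sum>j\<le>MJ. \<Sum>i\<le>MI. ennreal (ch j (fst z) * \<phi> i (snd z) * cmat b a j i)) \<le> ennreal (dist (fst z) (snd z)) + ennreal (2 * \<epsilon>)"
      unfolding z by simp
  qed
  also have "\<dots> = cost \<pi> + ennreal (2 * \<epsilon>)"
  proof -
    have "(\<lambda>z. ennreal (dist (fst z) (snd z))) \<in> borel_measurable \<pi>"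
      by (intro coupling_meas[OF c] continuous_intros)
    then show ?thesis unfolding cost_def using pr.emeasure_space_1 by (subst nn_integral_add) auto
  qed
  finally show "ennreal (\<Sum>j\<le>MJ. \<Sum>i\<le>MI. \<gamma> j i * cmat b a j i) \<le> cost \<pi> + ennreal (2 * \<epsilon>)" .
qed

lemma tail_mono:
  assumes "Ra \<le> Rb"
  shows "(\<integral>\<^sup>+ x. ennreal (dist x0 x) * indicator {x. Rb < dist x0 x} x \<partial>M) \<le> (\<integral>\<^sup>+ x. ennreal (dist x0 x) * indicator {x. Ra < dist x0 x} x \<partial>M)"
  using assms by (intro nn_integral_mono) (auto split: split_indicator)

lemma PU_integral:
  assumes "PU x0 R e m b ch" "M \<in> P1"
  shows "enn2real (\<integral>\<^sup>+ x. ennreal (ch j x) \<partial>M) = (\<integral>x. ch j x \<partial>M)"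
proof -
  have "ch j \<in> borel_measurable M"
    using PU_D(3)[OF assms(1)] by (simp add: measurable_P1[OF assms(2)] borel_measurable_continuous_onI)
  then show ?thesis using PU_D(1)[OF assms(1)] by (intro enn2real_nn_integral_eq_integral) auto
qed

lemma W1_lsc:
  fixes \<nu> \<mu> :: "'a::metric_space measure" and \<mu>s :: "nat \<Rightarrow> 'a measure"
  assumes P: "proper_space TYPE('a)" and m: "\<nu> \<in> P1" "\<mu> \<in> P1" and ms: "\<And>n. \<mu>s n \<in> P1"
    and nc: "narrow_conv \<mu>s \<mu>" and e: "e > 0"
  shows "eventually (\<lambda>n. W1 \<nu> \<mu> \<le> W1 \<nu> (\<mu>s n) + e) sequentially"
proof -
  define \<epsilon> where "\<epsilon> = e / 10"
  have \<epsilon>: "\<epsilon> > 0" unfolding \<epsilon>_def using e by simp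
  obtain x0 :: 'a where True by blast
  obtain R1 where R1: "R1 > 0" "(\<integral>\<^sup>+ x. ennreal (dist x0 x) * indicator {x. R1 < dist x0 x} x \<partial>\<nu>) < ennreal \<epsilon>"
    using tail_small[OF m(1) \<epsilon>] by blast
  obtain R2 where R2: "R2 > 0" "(\<integral>\<^sup>+ x. ennreal (dist x0 x) * indicator {x. R2 < dist x0 x} x \<partial>\<mu>) < ennreal \<epsilon>"
    using tail_small[OF m(2) \<epsilon>] by blast
  define R where "R = max R1 R2"
  have T1: "(\<integral>\<^sup>+ x. ennreal (dist x0 x) * indicator {x. R < dist x0 x} x \<partial>\<nu>) \<le> ennreal \<epsilon>"
  proof -
    have "R1 \<le> R" unfolding R_def by simp
    then show ?thesis using order_trans[OF tail_mono less_imp_le[OF R1(2)]] by blast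
  qed
  have T2: "(\<integral>\<^sup>+ x. ennreal (dist x0 x) * indicator {x. R < dist x0 x} x \<partial>\<mu>) \<le> ennreal \<epsilon>"
  proof -
    have "R2 \<le> R" unfolding R_def by simp
    then show ?thesis using order_trans[OF tail_mono less_imp_le[OF R2(2)]] by blast
  qed
  have R0: "R > 0" unfolding R_def using R1 by auto
  obtain MJ b ch where pu1: "PU x0 R \<epsilon> MJ b ch" using partition_unity[OF P \<epsilon>] by blast
  obtain MI a \<phi> where pu2: "PU x0 R \<epsilon> MI a \<phi>" using partition_unity[OF P \<epsilon>] by blast
  note X = PU_D[OF pu1]
  note Y = PU_D[OF pu2]
  define q where "q = (\<lambda>j. enn2real (\<integral>\<^sup>+ x. ennreal (ch j x) \<partial>\<nu>))"
  define p where "p = (\<lambda>i. enn2real (\<integral>\<^sup>+ x. ennreal (\<phi> i x) \<partial>\<mu>))"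
  define pn where "pn = (\<lambda>n i. enn2real (\<integral>\<^sup>+ x. ennreal (\<phi> i x) \<partial>\<mu>s n))"
  define C where "C = 2 * R"
  define cm where "cm = (\<lambda>j i. if j \<le> MJ \<and> i \<le> MI then cmat b a j i else 0)"
  have cm0: "0 \<le> cm j i" for j i unfolding cm_def cmat_def by auto
  have cmC: "cm j i \<le> C" for j i
  proof (cases "j \<le> MJ \<and> i \<le> MI \<and> 0 < j \<and> 0 < i")
    case True
    then have "b j \<in> cball x0 R" "a i \<in> cball x0 R" using X(5) Y(5) by auto
    then have "dist (b j) (a i) \<le> 2 * R" using dist_triangle[of "b j" "a i" x0] by (auto simp: dist_commute)
    then show ?thesis using True unfolding cm_def cmat_def C_def by auto
  next
    case False then show ?thesis unfolding cm_def cmat_def C_def using R0 by auto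
  qed
  have conv: "(\<lambda>n. pn n i) \<longlonglongrightarrow> p i" if "i \<le> MI" for i
  proof -
    have bnd: "bounded (range (\<phi> i))"
      using PU_le1[OF pu2 that] Y(1) by (auto simp: bounded_iff intro!: exI[of _ 1])
    have "(\<lambda>n. \<integral>x. \<phi> i x \<partial>\<mu>s n) \<longlonglongrightarrow> (\<integral>x. \<phi> i x \<partial>\<mu>)"
      using nc bnd Y(3) unfolding narrow_conv_def by blast
    then show ?thesis unfolding pn_def p_def using PU_integral[OF pu2 ms] PU_integral[OF pu2 m(2)] by simp
  qed
  have "(\<lambda>n. C * (\<Sum>i\<le>MI. \<bar>p i - pn n i\<bar>)) \<longlonglongrightarrow> C * (\<Sum>i\<le>MI. \<bar>p i - p i\<bar>)"
    using conv by (intro tendsto_intros) auto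
  then have "eventually (\<lambda>n. C * (\<Sum>i\<le>MI. \<bar>p i - pn n i\<bar>) < \<epsilon>) sequentially"
    using \<epsilon> by (intro order_tendstoD) auto
  then show ?thesis
  proof (rule eventually_mono)
    fix n assume small: "C * (\<Sum>i\<le>MI. \<bar>p i - pn n i\<bar>) < \<epsilon>"
    obtain \<pi> where \<pi>: "\<pi> \<in> couplings \<nu> (\<mu>s n)" "cost \<pi> < ennreal (W1 \<nu> (\<mu>s n) + \<epsilon>)"
      using W1_approx[OF P m(1) ms \<epsilon>] by blast
    define \<gamma> where "\<gamma> = (\<lambda>j i. enn2real (\<integral>\<^sup>+ z. ennreal (ch j (fst z) * \<phi> i (snd z)) \<partial>\<pi>))"
    note lb = lower_bound[OF P m(1) ms \<pi>(1) pu1 pu2 \<epsilon>]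
    have cmeq: "(\<Sum>j\<le>MJ. \<Sum>i\<le>MI. g j i * cm j i) = (\<Sum>j\<le>MJ. \<Sum>i\<le>MI. g j i * cmat b a j i)" for g
      unfolding cm_def by (intro sum.cong refl) auto
    obtain \<gamma>' where \<gamma>': "\<forall>j i. 0 \<le> \<gamma>' j i" "\<forall>j\<le>MJ. (\<Sum>i\<le>MI. \<gamma>' j i) = q j" "\<forall>i\<le>MI. (\<Sum>j\<le>MJ. \<gamma>' j i) = p i"
      "(\<Sum>j\<le>MJ. \<Sum>i\<le>MI. \<gamma>' j i * cm j i) \<le> (\<Sum>j\<le>MJ. \<Sum>i\<le>MI. \<gamma> j i * cm j i) + C * (\<Sum>i\<le>MI. \<bar>p i - pn n i\<bar>)"
    proof -
      have "\<exists>\<gamma>'. (\<forall>j i. 0 \<le> \<gamma>' j i) \<and> (\<forall>j\<le>MJ. (\<Sum>i\<le>MI. \<gamma>' j i) = q j) \<and> (\<forall>i\<le>MI. (\<Sum>j\<le>MJ. \<gamma>' j i) = p i)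
        \<and> (\<Sum>j\<le>MJ. \<Sum>i\<le>MI. \<gamma>' j i * cm j i) \<le> (\<Sum>j\<le>MJ. \<Sum>i\<le>MI. \<gamma> j i * cm j i) + C * (\<Sum>i\<le>MI. \<bar>p i - pn n i\<bar>)"
      proof (rule discrete_adjust)
        show "\<And>j i. 0 \<le> \<gamma> j i" unfolding \<gamma>_def by simp
        show "\<And>i. 0 \<le> p i" unfolding p_def by simp
        show "\<And>i. 0 \<le> pn n i" unfolding pn_def by simp
        show "\<And>j. j \<le> MJ \<Longrightarrow> (\<Sum>i\<le>MI. \<gamma> j i) = q j" unfolding q_def \<gamma>_def using lb(2) by simp
        show "\<And>i. i \<le> MI \<Longrightarrow> (\<Sum>j\<le>MJ. \<gamma> j i) = pn n i" unfolding pn_def \<gamma>_def using lb(3) by simp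
        show "(\<Sum>j\<le>MJ. q j) = 1" unfolding q_def by (rule PU_sum1[OF pu1 m(1)])
        show "(\<Sum>i\<le>MI. p i) = 1" unfolding p_def by (rule PU_sum1[OF pu2 m(2)])
        show "\<And>j i. 0 \<le> cm j i" by (rule cm0)
        show "\<And>j i. cm j i \<le> C" by (rule cmC)
      qed
      then show ?thesis using that by blast
    qed
    obtain \<pi>' where \<pi>': "\<pi>' \<in> couplings \<nu> \<mu>"
      "cost \<pi>' \<le> ennreal ((\<Sum>j\<le>MJ. \<Sum>i\<le>MI. \<gamma>' j i * cmat b a j i) + 2 * \<epsilon>)
       + 2 * (\<integral>\<^sup>+ x. ennreal (dist x0 x) * indicator {x. R < dist x0 x} x \<partial>\<nu>)
       + 2 * (\<integral>\<^sup>+ x. ennreal (dist x0 x) * indicator {x. R < dist x0 x} x \<partial>\<mu>)"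
    proof -
      have "\<exists>\<pi>' \<in> couplings \<nu> \<mu>. cost \<pi>' \<le> ennreal ((\<Sum>j\<le>MJ. \<Sum>i\<le>MI. \<gamma>' j i * cmat b a j i) + 2 * \<epsilon>)
       + 2 * (\<integral>\<^sup>+ x. ennreal (dist x0 x) * indicator {x. R < dist x0 x} x \<partial>\<nu>)
       + 2 * (\<integral>\<^sup>+ x. ennreal (dist x0 x) * indicator {x. R < dist x0 x} x \<partial>\<mu>)"
      proof (rule plan_coupling[OF P m pu1 pu2 \<epsilon>])
        show "\<And>j i. 0 \<le> \<gamma>' j i" using \<gamma>'(1) by blast
        show "\<And>j. j \<le> MJ \<Longrightarrow> (\<Sum>i\<le>MI. \<gamma>' j i) = q j" using \<gamma>'(2) by blast
        show "\<And>i. i \<le> MI \<Longrightarrow> (\<Sum>j\<le>MJ. \<gamma>' j i) = p i" using \<gamma>'(3) by blast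
        show "\<And>j. j \<le> MJ \<Longrightarrow> ennreal (q j) = (\<integral>\<^sup>+ x. ennreal (ch j x) \<partial>\<nu>)"
          unfolding q_def by (rule PU_nq[OF pu1 _ m(1)])
        show "\<And>i. i \<le> MI \<Longrightarrow> ennreal (p i) = (\<integral>\<^sup>+ x. ennreal (\<phi> i x) \<partial>\<mu>)"
          unfolding p_def by (rule PU_nq[OF pu2 _ m(2)])
      qed
      then show ?thesis using that by blast
    qed
    define S' where "S' = (\<Sum>j\<le>MJ. \<Sum>i\<le>MI. \<gamma>' j i * cmat b a j i)"
    define S where "S = (\<Sum>j\<le>MJ. \<Sum>i\<le>MI. \<gamma> j i * cmat b a j i)"
    have S'0: "0 \<le> S'" unfolding S'_def using \<gamma>'(1) by (auto intro!: sum_nonneg simp: cmat_def)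
    have "ennreal (W1 \<nu> \<mu>) \<le> cost \<pi>'" by (rule W1_le_cost[OF P m \<pi>'(1)])
    also have "\<dots> \<le> ennreal (S' + 2 * \<epsilon>) + 2 * ennreal \<epsilon> + 2 * ennreal \<epsilon>"
      using \<pi>'(2) T1 T2 unfolding S'_def[symmetric] by (meson add_mono mult_left_mono order_trans zero_le order_refl)
    also have "\<dots> = ennreal (S' + 6 * \<epsilon>)"
    proof -
      have a: "2 * ennreal \<epsilon> = ennreal (2 * \<epsilon>)" using \<epsilon> by (simp add: ennreal_mult)
      have e1: "ennreal (S' + 2 * \<epsilon>) + ennreal (2 * \<epsilon>) = ennreal (S' + 2 * \<epsilon> + 2 * \<epsilon>)"
        by (rule ennreal_plus[symmetric]) (use S'0 \<epsilon> in auto)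
      have e2: "ennreal (S' + 2 * \<epsilon> + 2 * \<epsilon>) + ennreal (2 * \<epsilon>) = ennreal (S' + 2 * \<epsilon> + 2 * \<epsilon> + 2 * \<epsilon>)"
        by (rule ennreal_plus[symmetric]) (use S'0 \<epsilon> in auto)
      have e3: "S' + 2 * \<epsilon> + 2 * \<epsilon> + 2 * \<epsilon> = S' + 6 * \<epsilon>" by simp
      show ?thesis unfolding a e1 e2 e3 ..
    qed
    finally have W1S': "W1 \<nu> \<mu> \<le> S' + 6 * \<epsilon>" using S'0 \<epsilon> by (subst (asm) ennreal_le_iff) auto
    have S'S: "S' \<le> S + \<epsilon>" using \<gamma>'(4) small unfolding S'_def S_def cmeq by linarith
    have "ennreal S \<le> cost \<pi> + ennreal (2 * \<epsilon>)" using lb(4) unfolding S_def \<gamma>_def by simp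
    also have "\<dots> \<le> ennreal (W1 \<nu> (\<mu>s n) + \<epsilon>) + ennreal (2 * \<epsilon>)" using \<pi>(2) by (intro add_right_mono) simp
    also have "\<dots> = ennreal (W1 \<nu> (\<mu>s n) + 3 * \<epsilon>)"
    proof -
      have "ennreal (W1 \<nu> (\<mu>s n) + \<epsilon>) + ennreal (2 * \<epsilon>) = ennreal (W1 \<nu> (\<mu>s n) + \<epsilon> + 2 * \<epsilon>)"
        by (rule ennreal_plus[symmetric]) (use W1_nonneg[of \<nu> "\<mu>s n"] \<epsilon> in auto)
      moreover have "W1 \<nu> (\<mu>s n) + \<epsilon> + 2 * \<epsilon> = W1 \<nu> (\<mu>s n) + 3 * \<epsilon>" by simp
      ultimately show ?thesis by simp
    qed
    finally have "S \<le> W1 \<nu> (\<mu>s n) + 3 * \<epsilon>"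
      using W1_nonneg[of \<nu> "\<mu>s n"] \<epsilon> by (subst (asm) ennreal_le_iff) auto
    then show "W1 \<nu> \<mu> \<le> W1 \<nu> (\<mu>s n) + e" using W1S' S'S unfolding \<epsilon>_def by linarith
  qed
qed

lemma W1_diff:
  fixes \<mu> \<nu> \<nu>' :: "'a::metric_space measure"
  assumes P: "proper_space TYPE('a)" and m: "\<mu> \<in> P1" "\<nu> \<in> P1" "\<nu>' \<in> P1"
  shows "\<bar>W1 \<nu>' \<mu> - W1 \<nu> \<mu>\<bar> \<le> W1 \<nu>' \<nu>"
proof -
  have "W1 \<nu>' \<mu> \<le> W1 \<nu>' \<nu> + W1 \<nu> \<mu>" by (rule W1_triangle[OF P m(3,2,1)])
  moreover have "W1 \<nu> \<mu> \<le> W1 \<nu> \<nu>' + W1 \<nu>' \<mu>" by (rule W1_triangle[OF P m(2,3,1)])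
  moreover have "W1 \<nu> \<nu>' = W1 \<nu>' \<nu>" by (rule W1_sym)
  ultimately show ?thesis by linarith
qed

lemma Fmed_conv:
  fixes \<nu> :: "nat \<Rightarrow> 'a::metric_space measure" and \<nu>s :: "nat \<Rightarrow> nat \<Rightarrow> 'a measure"
  assumes P: "proper_space TYPE('a)" and m: "\<forall>i<N. \<nu> i \<in> P1" "\<forall>n. \<forall>i<N. \<nu>s n i \<in> P1"
    and cl: "\<And>i. i < N \<Longrightarrow> (\<lambda>n. ls n i) \<longlonglongrightarrow> l i"
    and cw: "\<And>i. i < N \<Longrightarrow> (\<lambda>n. W1 (\<nu>s n i) (\<nu> i)) \<longlonglongrightarrow> 0"
    and mu: "\<mu> \<in> P1"
  shows "(\<lambda>n. Fmed N (ls n) (\<nu>s n) \<mu>) \<longlonglongrightarrow> Fmed N l \<nu> \<mu>"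
proof -
  have "(\<lambda>n. W1 (\<nu>s n i) \<mu>) \<longlonglongrightarrow> W1 (\<nu> i) \<mu>" if i: "i < N" for i
  proof -
    have "(\<lambda>n. W1 (\<nu>s n i) \<mu> - W1 (\<nu> i) \<mu>) \<longlonglongrightarrow> 0"
    proof (rule tendsto_rabs_zero_cancel, rule tendsto_sandwich[OF _ _ tendsto_const cw[OF i]])
      show "\<forall>\<^sub>F n in sequentially. 0 \<le> \<bar>W1 (\<nu>s n i) \<mu> - W1 (\<nu> i) \<mu>\<bar>" by simp
      show "\<forall>\<^sub>F n in sequentially. \<bar>W1 (\<nu>s n i) \<mu> - W1 (\<nu> i) \<mu>\<bar> \<le> W1 (\<nu>s n i) (\<nu> i)"
        using W1_diff[OF P mu] m i by auto
    qed
    then show ?thesis by (simp add: LIM_zero_cancel)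
  qed
  then show ?thesis unfolding Fmed_def using cl by (intro tendsto_sum tendsto_mult) auto
qed

lemma gamma_key:
  fixes \<nu> :: "nat \<Rightarrow> 'a::metric_space measure" and \<nu>s :: "nat \<Rightarrow> nat \<Rightarrow> 'a measure"
  assumes P: "proper_space TYPE('a)" and m: "\<forall>i<N. \<nu> i \<in> P1" "\<forall>n. \<forall>i<N. \<nu>s n i \<in> P1"
    and ls0: "\<And>n i. i < N \<Longrightarrow> 0 \<le> ls n i" and l0: "\<And>i. i < N \<Longrightarrow> 0 \<le> l i"
    and cl: "\<And>i. i < N \<Longrightarrow> (\<lambda>n. ls n i) \<longlonglongrightarrow> l i"
    and cw: "\<And>i. i < N \<Longrightarrow> (\<lambda>n. W1 (\<nu>s n i) (\<nu> i)) \<longlonglongrightarrow> 0"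
    and mu: "\<mu> \<in> P1" and mus: "\<And>n. \<mu>s n \<in> P1" and nc: "narrow_conv \<mu>s \<mu>"
    and c: "c < Fmed N l \<nu> \<mu>"
  shows "eventually (\<lambda>n. c < Fmed N (ls n) (\<nu>s n) (\<mu>s n)) sequentially"
proof -
  define F where "F = Fmed N l \<nu> \<mu>"
  define L where "L = (\<Sum>i<N. l i)"
  have L0: "0 \<le> L" unfolding L_def using l0 by (auto intro: sum_nonneg)
  define \<delta> where "\<delta> = (F - c) / (4 * (L + 1))"
  have \<delta>: "\<delta> > 0" unfolding \<delta>_def F_def using c L0 by auto
  define g where "g = (\<lambda>i. max 0 (W1 (\<nu> i) \<mu> - 2 * \<delta>))"
  have ev: "eventually (\<lambda>n. \<forall>i\<in>{..<N}. g i \<le> W1 (\<nu>s n i) (\<mu>s n)) sequentially"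
  proof (rule eventually_ball_finite, simp, intro ballI)
    fix i assume "i \<in> {..<N}"
    then have i: "i < N" by simp
    have e1: "eventually (\<lambda>n. W1 (\<nu> i) \<mu> \<le> W1 (\<nu> i) (\<mu>s n) + \<delta>) sequentially"
      using W1_lsc[OF P _ mu mus nc \<delta>] m(1) i by auto
    have e2: "eventually (\<lambda>n. W1 (\<nu>s n i) (\<nu> i) < \<delta>) sequentially"
      using order_tendstoD(2)[OF cw[OF i] \<delta>] .
    show "eventually (\<lambda>n. g i \<le> W1 (\<nu>s n i) (\<mu>s n)) sequentially"
      using e1 e2
    proof eventually_elim
      case (elim n)
      have "W1 (\<nu> i) (\<mu>s n) \<le> W1 (\<nu> i) (\<nu>s n i) + W1 (\<nu>s n i) (\<mu>s n)"
        using W1_triangle[OF P] m i mus by auto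
      moreover have "W1 (\<nu> i) (\<nu>s n i) = W1 (\<nu>s n i) (\<nu> i)" by (rule W1_sym)
      ultimately show ?case using elim W1_nonneg[of "\<nu>s n i" "\<mu>s n"] unfolding g_def by auto
    qed
  qed
  have gF: "(\<Sum>i<N. l i * g i) > c"
  proof -
    have "(\<Sum>i<N. l i * g i) \<ge> (\<Sum>i<N. l i * (W1 (\<nu> i) \<mu> - 2 * \<delta>))"
      using l0 unfolding g_def by (intro sum_mono mult_left_mono) auto
    also have "(\<Sum>i<N. l i * (W1 (\<nu> i) \<mu> - 2 * \<delta>)) = F - 2 * \<delta> * L"
      unfolding F_def Fmed_def L_def by (simp add: algebra_simps sum_subtractf sum_distrib_left)
    finally have "(\<Sum>i<N. l i * g i) \<ge> F - 2 * \<delta> * L" .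
    moreover have "2 * \<delta> * L < F - c"
    proof -
      have "2 * \<delta> * L = (F - c) * (2 * L / (4 * (L + 1)))" unfolding \<delta>_def using L0 by (simp add: field_simps)
      also have "\<dots> < (F - c) * 1" using c L0 unfolding F_def by (intro mult_strict_left_mono) (auto simp: field_simps)
      finally show ?thesis by simp
    qed
    ultimately show ?thesis by linarith
  qed
  have "(\<lambda>n. \<Sum>i<N. ls n i * g i) \<longlonglongrightarrow> (\<Sum>i<N. l i * g i)"
    using cl by (intro tendsto_sum tendsto_mult tendsto_const) auto
  then have ev2: "eventually (\<lambda>n. c < (\<Sum>i<N. ls n i * g i)) sequentially"
    using gF by (rule order_tendstoD(1))
  show ?thesis using ev ev2
  proof eventually_elim
    case (elim n)
    have "(\<Sum>i<N. ls n i * g i) \<le> Fmed N (ls n) (\<nu>s n) (\<mu>s n)"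
      unfolding Fmed_def using elim(1) ls0 by (intro sum_mono mult_left_mono) auto
    then show ?case using elim(2) by linarith
  qed
qed

theorem lemma3p1:
  fixes l :: "nat \<Rightarrow> real" and \<nu> :: "nat \<Rightarrow> 'a::metric_space measure"
    and ls :: "nat \<Rightarrow> nat \<Rightarrow> real" and \<nu>s :: "nat \<Rightarrow> nat \<Rightarrow> 'a measure"
    and N :: nat
  assumes "proper_space TYPE('a)"
    and "N \<ge> 1"
    and "l \<in> unit_simplex N" and "\<forall>i<N. \<nu> i \<in> P1"
    and "\<forall>n. ls n \<in> unit_simplex N" and "\<forall>n. \<forall>i<N. \<nu>s n i \<in> P1"
    and "(\<lambda>n. (\<Sum>i<N. \<bar>ls n i - l i\<bar>) + Max ((\<lambda>i. W1 (\<nu>s n i) (\<nu> i)) ` {..<N})) \<longlonglongrightarrow> 0"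
  shows "gamma_conv_narrow (\<lambda>n. Fmed N (ls n) (\<nu>s n)) (Fmed N l \<nu>) \<and>
         (\<forall>\<mu>s. (\<forall>n. \<mu>s n \<in> Med N (ls n) (\<nu>s n)) \<longrightarrow>
            (\<forall>\<mu> \<in> P1. narrow_cluster_point \<mu>s \<mu> \<longrightarrow> \<mu> \<in> Med N l \<nu>))"
proof -
  note P = assms(1)
  have ls0: "\<And>n i. i < N \<Longrightarrow> 0 \<le> ls n i" using assms(5) unfolding unit_simplex_def by auto
  have l0: "\<And>i. i < N \<Longrightarrow> 0 \<le> l i" using assms(3) unfolding unit_simplex_def by auto
  define tot where "tot = (\<lambda>n. (\<Sum>i<N. \<bar>ls n i - l i\<bar>) + Max ((\<lambda>i. W1 (\<nu>s n i) (\<nu> i)) ` {..<N}))"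
  have Max_ge: "W1 (\<nu>s n i) (\<nu> i) \<le> Max ((\<lambda>i. W1 (\<nu>s n i) (\<nu> i)) ` {..<N})" if "i < N" for n i
    using that by (intro Max_ge) auto
  have Max0: "0 \<le> Max ((\<lambda>i. W1 (\<nu>s n i) (\<nu> i)) ` {..<N})" for n
  proof -
    have "0 < N" using assms(2) by simp
    then show ?thesis using Max_ge[of 0 n] W1_nonneg[of "\<nu>s n 0" "\<nu> 0"] by linarith
  qed
  have cl: "(\<lambda>n. ls n i) \<longlonglongrightarrow> l i" if i: "i < N" for i
  proof -
    have "(\<lambda>n. ls n i - l i) \<longlonglongrightarrow> 0"
    proof (rule tendsto_rabs_zero_cancel, rule tendsto_sandwich[OF _ _ tendsto_const assms(7)])
      show "\<forall>\<^sub>F n in sequentially. 0 \<le> \<bar>ls n i - l i\<bar>" by simp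
      show "\<forall>\<^sub>F n in sequentially. \<bar>ls n i - l i\<bar> \<le> (\<Sum>i<N. \<bar>ls n i - l i\<bar>) + Max ((\<lambda>i. W1 (\<nu>s n i) (\<nu> i)) ` {..<N})"
      proof (intro always_eventually allI)
        fix n
        have "\<bar>ls n i - l i\<bar> \<le> (\<Sum>i<N. \<bar>ls n i - l i\<bar>)" using i by (intro member_le_sum) auto
        then show "\<bar>ls n i - l i\<bar> \<le> (\<Sum>i<N. \<bar>ls n i - l i\<bar>) + Max ((\<lambda>i. W1 (\<nu>s n i) (\<nu> i)) ` {..<N})"
          using Max0[of n] by linarith
      qed
    qed
    then show ?thesis by (simp add: LIM_zero_cancel)
  qed
  have cw: "(\<lambda>n. W1 (\<nu>s n i) (\<nu> i)) \<longlonglongrightarrow> 0" if i: "i < N" for i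
  proof (rule tendsto_sandwich[OF _ _ tendsto_const assms(7)])
    show "\<forall>\<^sub>F n in sequentially. 0 \<le> W1 (\<nu>s n i) (\<nu> i)" by (simp add: W1_nonneg)
    show "\<forall>\<^sub>F n in sequentially. W1 (\<nu>s n i) (\<nu> i) \<le> (\<Sum>i<N. \<bar>ls n i - l i\<bar>) + Max ((\<lambda>i. W1 (\<nu>s n i) (\<nu> i)) ` {..<N})"
    proof (intro always_eventually allI)
      fix n
      have "0 \<le> (\<Sum>i<N. \<bar>ls n i - l i\<bar>)" by (intro sum_nonneg) auto
      then show "W1 (\<nu>s n i) (\<nu> i) \<le> (\<Sum>i<N. \<bar>ls n i - l i\<bar>) + Max ((\<lambda>i. W1 (\<nu>s n i) (\<nu> i)) ` {..<N})"
        using Max_ge[OF i, of n] by linarith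
    qed
  qed
  have liminf: "ereal (Fmed N l \<nu> \<mu>) \<le> liminf (\<lambda>n. ereal (Fmed N (ls n) (\<nu>s n) (\<mu>s n)))"
    if mu: "\<mu> \<in> P1" and mus: "\<forall>n. \<mu>s n \<in> P1" and nc: "narrow_conv \<mu>s \<mu>" for \<mu> \<mu>s
  proof (subst le_Liminf_iff, intro allI impI)
    fix y assume y: "y < ereal (Fmed N l \<nu> \<mu>)"
    show "eventually (\<lambda>n. y < ereal (Fmed N (ls n) (\<nu>s n) (\<mu>s n))) sequentially"
    proof (cases y)
      case (real c)
      then have "c < Fmed N l \<nu> \<mu>" using y by simp
      from gamma_key[OF P assms(4,6) ls0 l0 cl cw mu _ nc this] mus
      show ?thesis unfolding real by auto
    next
      case PInf then show ?thesis using y by simp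
    next
      case MInf then show ?thesis by simp
    qed
  qed
  have recov: "\<exists>\<mu>s. (\<forall>n. \<mu>s n \<in> P1) \<and> narrow_conv \<mu>s \<mu> \<and>
         limsup (\<lambda>n. ereal (Fmed N (ls n) (\<nu>s n) (\<mu>s n))) \<le> ereal (Fmed N l \<nu> \<mu>)"
    if mu: "\<mu> \<in> P1" for \<mu>
  proof (intro exI[of _ "\<lambda>_. \<mu>"] conjI)
    show "\<forall>n. \<mu> \<in> P1" using mu by simp
    show "narrow_conv (\<lambda>_. \<mu>) \<mu>" unfolding narrow_conv_def by simp
    have "(\<lambda>n. ereal (Fmed N (ls n) (\<nu>s n) \<mu>)) \<longlonglongrightarrow> ereal (Fmed N l \<nu> \<mu>)"
      using Fmed_conv[OF P assms(4,6) cl cw mu] by (rule tendsto_ereal)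
    then have "limsup (\<lambda>n. ereal (Fmed N (ls n) (\<nu>s n) \<mu>)) = ereal (Fmed N l \<nu> \<mu>)"
      by (intro lim_imp_Limsup) simp_all
    then show "limsup (\<lambda>n. ereal (Fmed N (ls n) (\<nu>s n) \<mu>)) \<le> ereal (Fmed N l \<nu> \<mu>)" by simp
  qed
  have part1: "gamma_conv_narrow (\<lambda>n. Fmed N (ls n) (\<nu>s n)) (Fmed N l \<nu>)"
    unfolding gamma_conv_narrow_def using liminf recov by blast
  have part2: "\<mu> \<in> Med N l \<nu>"
    if med: "\<forall>n. \<mu>s n \<in> Med N (ls n) (\<nu>s n)" and mu: "\<mu> \<in> P1" and cp: "narrow_cluster_point \<mu>s \<mu>" for \<mu>s \<mu>
  proof -
    obtain r where r: "strict_mono r" "narrow_conv (\<mu>s \<circ> r) \<mu>" using cp unfolding narrow_cluster_point_def by blast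
    have musP: "\<mu>s n \<in> P1" for n using med unfolding Med_def by auto
    have minim: "Fmed N (ls n) (\<nu>s n) (\<mu>s n) \<le> Fmed N (ls n) (\<nu>s n) \<mu>'" if "\<mu>' \<in> P1" for n \<mu>'
      using med that unfolding Med_def by auto
    have "Fmed N l \<nu> \<mu> \<le> Fmed N l \<nu> \<mu>'" if mu': "\<mu>' \<in> P1" for \<mu>'
    proof (rule ccontr)
      assume "\<not> ?thesis"
      then have lt: "Fmed N l \<nu> \<mu>' < Fmed N l \<nu> \<mu>" by simp
      define c where "c = (Fmed N l \<nu> \<mu>' + Fmed N l \<nu> \<mu>) / 2"
      have c1: "c < Fmed N l \<nu> \<mu>" and c2: "Fmed N l \<nu> \<mu>' < c" using lt unfolding c_def by auto
      have clr: "(\<lambda>n. (ls \<circ> r) n i) \<longlonglongrightarrow> l i" if "i < N" for i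
        using LIMSEQ_subseq_LIMSEQ[OF cl[OF that] r(1)] by (simp add: comp_def)
      have cwr: "(\<lambda>n. W1 ((\<nu>s \<circ> r) n i) (\<nu> i)) \<longlonglongrightarrow> 0" if "i < N" for i
        using LIMSEQ_subseq_LIMSEQ[OF cw[OF that] r(1)] by (simp add: comp_def)
      have m6r: "\<forall>n. \<forall>i<N. (\<nu>s \<circ> r) n i \<in> P1" using assms(6) by simp
      have e1: "eventually (\<lambda>n. c < Fmed N ((ls \<circ> r) n) ((\<nu>s \<circ> r) n) ((\<mu>s \<circ> r) n)) sequentially"
        by (rule gamma_key[OF P assms(4) m6r _ l0 clr cwr mu _ r(2) c1]) (use ls0 musP in auto)
      have "(\<lambda>n. Fmed N ((ls \<circ> r) n) ((\<nu>s \<circ> r) n) \<mu>') \<longlonglongrightarrow> Fmed N l \<nu> \<mu>'"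
        by (rule Fmed_conv[OF P assms(4) m6r clr cwr mu'])
      then have e2: "eventually (\<lambda>n. Fmed N ((ls \<circ> r) n) ((\<nu>s \<circ> r) n) \<mu>' < c) sequentially"
        using c2 by (rule order_tendstoD(2))
      have "eventually (\<lambda>n. False) sequentially"
        using e1 e2
      proof eventually_elim
        case (elim n)
        have "Fmed N ((ls \<circ> r) n) ((\<nu>s \<circ> r) n) ((\<mu>s \<circ> r) n) \<le> Fmed N ((ls \<circ> r) n) ((\<nu>s \<circ> r) n) \<mu>'"
          using minim[OF mu', of "r n"] by simp
        then show ?case using elim by linarith
      qed
      then show False by simp
    qed
    then show ?thesis unfolding Med_def using mu by auto
  qed
  show ?thesis using part1 part2 by blast
qed

end
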